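(* For all positive integers $m_1,\dots,m_S$, $B(m_1,\dots,m_S)$ equals the coefficient of $x_1^{m_1}\cdots x_S^{m_S}$ in the Taylor expansion at the origin of $$F_B(x_1,\dots,x_S)=\frac{x_1\cdots x_S}{(1-x_1)\cdots(1-x_S)(1-x_1-\dots-x_S)}.$$
   Context: For nonnegative integers $n_1,\dots,n_S$, $E(n_1,\dots,n_S)$ denotes the number of block derangements: $S$ players hold $n_1,\dots,n_S$ distinct cards respectively; all $N=n_1+\dots+n_S$ cards are redealt so that player $j$ again receives exactly $n_j$ cards (only which cards each player gets matters); $E$ counts the deals in which no player receives any card he originally held. Equivalently, $E(n_1,\dots,n_S)$ is the coefficient of $x_1^{n_1}\cdots x_S^{n_S}$ in $\prod_{j=1}^S(x_1+\dots+x_S-x_j)^{n_j}$. By convention $E(0,\dots,0)=1$. For positive integers $m_1,\dots,m_S$, $B(m_1,\dots,m_S)=\sum_{k_1=1}^{m_1}\cdots\sum_{k_S=1}^{m_S}\binom{m_1}{k_1}\cdots\binom{m_S}{k_S}E(k_1-1,\dots,k_S-1)$. *)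

theory Defs
  imports Complex_Main "HOL-Library.FuncSet"
begin

text \<open>Players are indexed by 0..<S; a tuple (n_1,...,n_S) is a function n :: nat => nat
  of which only the values on 0..<S matter.  Player j originally holds the cards (j,t), t < n j.\<close>

definition cards :: "nat \<Rightarrow> (nat \<Rightarrow> nat) \<Rightarrow> (nat \<times> nat) set" where
  "cards S n = {(j, t). j < S \<and> t < n j}"

text \<open>Block derangements: redeals f (each card goes to some player), player i again receives
  exactly n i cards, and no card goes back to its original holder.\<close>
definition E :: "nat \<Rightarrow> (nat \<Rightarrow> nat) \<Rightarrow> nat" where
  "E S n = card {f \<in> cards S n \<rightarrow>\<^sub>E {0..<S}.
      (\<forall>c\<in>cards S n. f c \<noteq> fst c) \<and>
      (\<forall>i<S. card {c \<in> cards S n. f c = i} = n i)}"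

definition B :: "nat \<Rightarrow> (nat \<Rightarrow> nat) \<Rightarrow> nat" where
  "B S m = (\<Sum>k \<in> PiE {0..<S} (\<lambda>i. {1..m i}).
      (\<Prod>i<S. m i choose k i) * E S (\<lambda>i. k i - 1))"

text \<open>Formal power series in the variables x_0..x_{S-1} with real coefficients:
  a function from exponent vectors to coefficients; only exponent vectors supported
  in 0..<S are relevant.\<close>

definition expvecs :: "nat \<Rightarrow> (nat \<Rightarrow> nat) set" where
  "expvecs S = {\<alpha>. \<forall>i\<ge>S. \<alpha> i = 0}"

type_synonym mps = "(nat \<Rightarrow> nat) \<Rightarrow> real"

definition mps_mult :: "mps \<Rightarrow> mps \<Rightarrow> mps" where
  "mps_mult f g \<alpha> = (\<Sum>\<beta> \<in> {\<beta>. \<forall>i. \<beta> i \<le> \<alpha> i}. f \<beta> * g (\<lambda>i. \<alpha> i - \<beta> i))"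

definition mps_one :: mps where
  "mps_one \<alpha> = (if \<alpha> = (\<lambda>_. 0) then 1 else 0)"

definition mps_var :: "nat \<Rightarrow> mps" where
  "mps_var i \<alpha> = (if \<alpha> = (\<lambda>j. if j = i then 1 else 0) then 1 else 0)"

definition mps_prod :: "nat list \<Rightarrow> (nat \<Rightarrow> mps) \<Rightarrow> mps" where
  "mps_prod is F = foldr (\<lambda>i acc. mps_mult (F i) acc) is mps_one"

definition FB_num :: "nat \<Rightarrow> mps" where
  "FB_num S = mps_prod [0..<S] mps_var"

definition FB_den :: "nat \<Rightarrow> mps" where
  "FB_den S = mps_mult (mps_prod [0..<S] (\<lambda>i \<alpha>. mps_one \<alpha> - mps_var i \<alpha>))
                       (\<lambda>\<alpha>. mps_one \<alpha> - (\<Sum>i<S. mps_var i \<alpha>))"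

text \<open>P is the Taylor expansion at the origin of FB_num / FB_den (which has constant term 1):
  FB_den * P = FB_num as formal power series in S variables.\<close>
definition is_expansion_FB :: "nat \<Rightarrow> mps \<Rightarrow> bool" where
  "is_expansion_FB S P \<longleftrightarrow> (\<forall>\<alpha>\<in>expvecs S. mps_mult (FB_den S) P \<alpha> = FB_num S \<alpha>)"

end

theory Submission
  imports Defs "HOL-Library.FuncSet"
begin


definition fs :: "(nat \<Rightarrow> nat) \<Rightarrow> bool" where
  "fs \<alpha> \<longleftrightarrow> finite {i. \<alpha> i \<noteq> 0}"

abbreviation LE :: "(nat \<Rightarrow> nat) \<Rightarrow> (nat \<Rightarrow> nat) set" where
  "LE \<alpha> \<equiv> {\<beta>. \<forall>i. \<beta> i \<le> \<alpha> i}"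

lemma finite_LE: assumes "fs \<alpha>" shows "finite (LE \<alpha>)"
proof -
  define I where "I = {i. \<alpha> i \<noteq> 0}"
  have fI: "finite I" using assms by (simp add: fs_def I_def)
  have "LE \<alpha> \<subseteq> (\<lambda>g i. if i \<in> I then g i else 0) ` PiE I (\<lambda>i. {..\<alpha> i})"
  proof
    fix \<beta> assume b: "\<beta> \<in> LE \<alpha>"
    have "\<beta> = (\<lambda>i. if i \<in> I then restrict \<beta> I i else 0)"
    proof
      fix i show "\<beta> i = (if i \<in> I then restrict \<beta> I i else 0)"
        using b[simplified, rule_format, of i] by (auto simp: I_def)
    qed
    moreover have "restrict \<beta> I \<in> PiE I (\<lambda>i. {..\<alpha> i})" using b by auto
    ultimately show "\<beta> \<in> (\<lambda>g i. if i \<in> I then g i else 0) ` PiE I (\<lambda>i. {..\<alpha> i})" by blast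
  qed
  moreover have "finite (PiE I (\<lambda>i. {..\<alpha> i}))" using fI by (simp add: finite_PiE)
  ultimately show ?thesis using finite_subset by blast
qed

lemma infinite_LE: assumes "\<not> fs \<alpha>" shows "infinite (LE \<alpha>)"
proof
  assume fin: "finite (LE \<alpha>)"
  define I where "I = {i. \<alpha> i \<noteq> 0}"
  have "inj_on (\<lambda>i j. if j = i then \<alpha> i else 0) I"
  proof (rule inj_onI)
    fix x y assume "x \<in> I" "y \<in> I" and e: "(\<lambda>j. if j = x then \<alpha> x else 0) = (\<lambda>j. if j = y then \<alpha> y else 0)"
    from e have "(if x = x then \<alpha> x else 0) = (if x = y then \<alpha> y else 0)" by (rule fun_cong)
    with \<open>x \<in> I\<close> show "x = y" by (auto simp: I_def split: if_splits)
  qed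
  moreover have "(\<lambda>i j. if j = i then \<alpha> i else 0) ` I \<subseteq> LE \<alpha>" by auto
  ultimately have "finite I" using fin finite_subset inj_on_finite by blast
  thus False using assms by (simp add: fs_def I_def)
qed

lemma fs_le: assumes "fs \<alpha>" "\<forall>i. \<beta> i \<le> \<alpha> i" shows "fs \<beta>"
proof -
  have "{i. \<beta> i \<noteq> 0} \<subseteq> {i. \<alpha> i \<noteq> 0}" using assms(2) by (metis (mono_tags, lifting) Collect_mono le_zero_eq)
  thus ?thesis using assms(1) unfolding fs_def using finite_subset by blast
qed

lemma fs_diff: "fs \<alpha> \<Longrightarrow> fs (\<lambda>i. \<alpha> i - \<beta> i)"
  by (rule fs_le) auto

lemma mult_nonfs: "\<not> fs \<alpha> \<Longrightarrow> mps_mult f g \<alpha> = 0"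
  using infinite_LE by (simp add: mps_mult_def)

lemma mps_assoc: "mps_mult (mps_mult f g) h = mps_mult f (mps_mult g h)"
proof
  fix \<alpha>
  show "mps_mult (mps_mult f g) h \<alpha> = mps_mult f (mps_mult g h) \<alpha>"
  proof (cases "fs \<alpha>")
    case False thus ?thesis by (simp add: mult_nonfs)
  next
    case True
    have fL: "\<And>\<beta>. \<beta> \<in> LE \<alpha> \<Longrightarrow> finite (LE \<beta>)" using True fs_le finite_LE by blast
    have fL2: "\<And>\<gamma>. finite (LE (\<lambda>i. \<alpha> i - \<gamma> i))" using True fs_diff finite_LE by blast
    have "mps_mult (mps_mult f g) h \<alpha> =
       (\<Sum>\<beta>\<in>LE \<alpha>. \<Sum>\<gamma>\<in>LE \<beta>. f \<gamma> * g (\<lambda>i. \<beta> i - \<gamma> i) * h (\<lambda>i. \<alpha> i - \<beta> i))"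
      by (simp add: mps_mult_def sum_distrib_right)
    also have "\<dots> = (\<Sum>(\<beta>,\<gamma>)\<in>(SIGMA \<beta>:LE \<alpha>. LE \<beta>). f \<gamma> * g (\<lambda>i. \<beta> i - \<gamma> i) * h (\<lambda>i. \<alpha> i - \<beta> i))"
      using finite_LE[OF True] fL by (subst sum.Sigma) auto
    also have "\<dots> = (\<Sum>(\<gamma>,\<delta>)\<in>(SIGMA \<gamma>:LE \<alpha>. LE (\<lambda>i. \<alpha> i - \<gamma> i)). f \<gamma> * (g \<delta> * h (\<lambda>i. \<alpha> i - \<gamma> i - \<delta> i)))"
    proof (rule sum.reindex_bij_witness[where i = "\<lambda>(\<gamma>,\<delta>). (\<lambda>i. \<gamma> i + \<delta> i, \<gamma>)"
                                          and j = "\<lambda>(\<beta>,\<gamma>). (\<gamma>, \<lambda>i. \<beta> i - \<gamma> i)"])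
      fix b assume "b \<in> (SIGMA \<gamma>:LE \<alpha>. LE (\<lambda>i. \<alpha> i - \<gamma> i))"
      then obtain \<gamma> \<delta> where a: "b = (\<gamma>,\<delta>)" "\<forall>i. \<gamma> i \<le> \<alpha> i" "\<forall>i. \<delta> i \<le> \<alpha> i - \<gamma> i" by auto
      show "(\<lambda>(\<beta>,\<gamma>). (\<gamma>, \<lambda>i. \<beta> i - \<gamma> i)) ((\<lambda>(\<gamma>,\<delta>). (\<lambda>i. \<gamma> i + \<delta> i, \<gamma>)) b) = b"
        using a by auto
      show "(\<lambda>(\<gamma>,\<delta>). (\<lambda>i. \<gamma> i + \<delta> i, \<gamma>)) b \<in> (SIGMA \<beta>:LE \<alpha>. LE \<beta>)"
        using a by (auto simp: le_diff_conv2 add.commute)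
    next
      fix a assume "a \<in> (SIGMA \<beta>:LE \<alpha>. LE \<beta>)"
      then obtain \<beta> \<gamma> where b: "a = (\<beta>,\<gamma>)" "\<forall>i. \<beta> i \<le> \<alpha> i" "\<forall>i. \<gamma> i \<le> \<beta> i" by auto
      show "(\<lambda>(\<gamma>,\<delta>). (\<lambda>i. \<gamma> i + \<delta> i, \<gamma>)) ((\<lambda>(\<beta>,\<gamma>). (\<gamma>, \<lambda>i. \<beta> i - \<gamma> i)) a) = a"
        using b by auto
      show "(\<lambda>(\<beta>,\<gamma>). (\<gamma>, \<lambda>i. \<beta> i - \<gamma> i)) a \<in> (SIGMA \<gamma>:LE \<alpha>. LE (\<lambda>i. \<alpha> i - \<gamma> i))"
        using b by (auto intro: order_trans diff_le_mono)
      have "(\<lambda>i. \<alpha> i - \<gamma> i - (\<beta> i - \<gamma> i)) = (\<lambda>i. \<alpha> i - \<beta> i)"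
        using b by (auto simp: fun_eq_iff)
      thus "(case (\<lambda>(\<beta>,\<gamma>). (\<gamma>, \<lambda>i. \<beta> i - \<gamma> i)) a of (\<gamma>,\<delta>) \<Rightarrow> f \<gamma> * (g \<delta> * h (\<lambda>i. \<alpha> i - \<gamma> i - \<delta> i)))
           = (case a of (\<beta>,\<gamma>) \<Rightarrow> f \<gamma> * g (\<lambda>i. \<beta> i - \<gamma> i) * h (\<lambda>i. \<alpha> i - \<beta> i))"
        using b by (simp add: mult.assoc)
    qed
    also have "\<dots> = (\<Sum>\<gamma>\<in>LE \<alpha>. \<Sum>\<delta>\<in>LE (\<lambda>i. \<alpha> i - \<gamma> i). f \<gamma> * (g \<delta> * h (\<lambda>i. \<alpha> i - \<gamma> i - \<delta> i)))"
      using finite_LE[OF True] fL2 by (subst sum.Sigma) auto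
    also have "\<dots> = mps_mult f (mps_mult g h) \<alpha>"
      by (simp add: mps_mult_def sum_distrib_left)
    finally show ?thesis .
  qed
qed

lemma mult_one_left: "fs \<alpha> \<Longrightarrow> mps_mult mps_one f \<alpha> = f \<alpha>"
proof -
  assume a: "fs \<alpha>"
  have "mps_mult mps_one f \<alpha> = (\<Sum>\<beta>\<in>LE \<alpha>. if \<beta> = (\<lambda>_. 0) then f (\<lambda>i. \<alpha> i - \<beta> i) else 0)"
    unfolding mps_mult_def mps_one_def by (rule sum.cong) auto
  also have "\<dots> = f \<alpha>" using finite_LE[OF a] by (simp add: sum.delta)
  finally show ?thesis .
qed

lemma mult_var: assumes "fs \<alpha>"
  shows "mps_mult (mps_var i) f \<alpha> = (if 1 \<le> \<alpha> i then f (\<alpha>(i := \<alpha> i - 1)) else 0)"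
proof -
  let ?e = "\<lambda>j::nat. if j = i then 1 else (0::nat)"
  have "mps_mult (mps_var i) f \<alpha> = (\<Sum>\<beta>\<in>LE \<alpha>. if \<beta> = ?e then f (\<lambda>j. \<alpha> j - \<beta> j) else 0)"
    unfolding mps_mult_def mps_var_def by (rule sum.cong) auto
  also have "\<dots> = (if ?e \<in> LE \<alpha> then f (\<lambda>j. \<alpha> j - ?e j) else 0)"
    using finite_LE[OF assms] by (simp only: sum.delta)
  also have "\<dots> = (if 1 \<le> \<alpha> i then f (\<alpha>(i := \<alpha> i - 1)) else 0)"
  proof -
    have "(?e \<in> LE \<alpha>) = (1 \<le> \<alpha> i)" by auto
    moreover have "(\<lambda>j. \<alpha> j - ?e j) = \<alpha>(i := \<alpha> i - 1)" by auto
    ultimately show ?thesis by simp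
  qed
  finally show ?thesis .
qed

lemma mult_diff_left: "mps_mult (\<lambda>\<alpha>. f \<alpha> - g \<alpha>) h \<alpha> = mps_mult f h \<alpha> - mps_mult g h \<alpha>"
  by (simp add: mps_mult_def left_diff_distrib sum_subtractf)

lemma mult_diff_right: "mps_mult h (\<lambda>\<alpha>. f \<alpha> - g \<alpha>) \<alpha> = mps_mult h f \<alpha> - mps_mult h g \<alpha>"
  by (simp add: mps_mult_def right_diff_distrib sum_subtractf)

lemma mult_sum_left: "mps_mult (\<lambda>\<alpha>. \<Sum>i\<in>A. f i \<alpha>) h \<alpha> = (\<Sum>i\<in>A. mps_mult (f i) h \<alpha>)"
  by (simp add: mps_mult_def sum_distrib_right sum.swap[of _ A])

lemma mult_zero: "mps_mult f g (\<lambda>_. 0) = f (\<lambda>_. 0) * g (\<lambda>_. 0)"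
proof -
  have "LE (\<lambda>_. 0) = {\<lambda>_. 0}" by auto
  thus ?thesis by (simp add: mps_mult_def)
qed

lemma mult_cong: "(\<And>\<alpha>. fs \<alpha> \<Longrightarrow> g \<alpha> = g' \<alpha>) \<Longrightarrow> mps_mult f g = mps_mult f g'"
proof
  fix \<alpha> assume h: "\<And>\<alpha>. fs \<alpha> \<Longrightarrow> g \<alpha> = g' \<alpha>"
  show "mps_mult f g \<alpha> = mps_mult f g' \<alpha>"
  proof (cases "fs \<alpha>")
    case True
    show ?thesis unfolding mps_mult_def
      by (rule sum.cong) (auto intro!: h fs_diff True)
  qed (simp add: mult_nonfs)
qed


lemma expvecs_fs: "\<alpha> \<in> expvecs S \<Longrightarrow> fs \<alpha>"
  unfolding expvecs_def fs_def
  by (rule finite_subset[of _ "{..<S}"]) (auto simp: not_less[symmetric])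

definition Lden :: "nat \<Rightarrow> mps" where
  "Lden S = (\<lambda>\<alpha>. mps_one \<alpha> - (\<Sum>i<S. mps_var i \<alpha>))"

definition Aden :: "nat \<Rightarrow> mps" where
  "Aden S = mps_prod [0..<S] (\<lambda>i \<alpha>. mps_one \<alpha> - mps_var i \<alpha>)"

lemma FB_den_eq: "FB_den S = mps_mult (Aden S) (Lden S)"
  by (simp add: FB_den_def Aden_def Lden_def)

lemma foldr_one_mult:
  "\<forall>\<alpha>. fs \<alpha> \<longrightarrow> mps_mult (foldr (\<lambda>i acc. mps_mult (F i) acc) xs mps_one) W \<alpha>
        = foldr (\<lambda>i acc. mps_mult (F i) acc) xs W \<alpha>"
proof (induction xs)
  case Nil thus ?case by (simp add: mult_one_left)
next
  case (Cons x xs)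
  have "mps_mult (foldr (\<lambda>i acc. mps_mult (F i) acc) (x # xs) mps_one) W
      = mps_mult (F x) (mps_mult (foldr (\<lambda>i acc. mps_mult (F i) acc) xs mps_one) W)"
    by (simp add: mps_assoc)
  also have "\<dots> = mps_mult (F x) (foldr (\<lambda>i acc. mps_mult (F i) acc) xs W)"
    by (rule mult_cong) (use Cons in auto)
  finally show ?case by simp
qed

definition Gp :: "nat \<Rightarrow> mps" where
  "Gp S \<alpha> = (if \<alpha> \<in> expvecs S \<and> (\<forall>i<S. 1 \<le> \<alpha> i) then 1 else 0)"

lemma expvecs_upd: "i < S \<Longrightarrow> (\<alpha>(i := v) \<in> expvecs S) = (\<alpha> \<in> expvecs S)"
  by (auto simp: expvecs_def)

lemma fs_upd_dec: "fs \<alpha> \<Longrightarrow> fs (\<alpha>(i := \<alpha> i - 1))"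
  by (rule fs_le) auto

lemma foldr_A:
  assumes "distinct xs" "set xs \<subseteq> {..<S}" "\<And>\<alpha>. fs \<alpha> \<Longrightarrow> Z \<alpha> = Gp S \<alpha>"
  shows "\<forall>\<alpha>. fs \<alpha> \<longrightarrow> foldr (\<lambda>i acc. mps_mult (\<lambda>\<alpha>. mps_one \<alpha> - mps_var i \<alpha>) acc) xs Z \<alpha>
     = (if \<alpha> \<in> expvecs S \<and> (\<forall>i<S. 1 \<le> \<alpha> i) \<and> (\<forall>i\<in>set xs. \<alpha> i = 1) then 1 else 0)"
  using assms(1,2)
proof (induction xs)
  case Nil thus ?case using assms(3) by (simp add: Gp_def)
next
  case (Cons x xs)
  let ?Y = "foldr (\<lambda>i acc. mps_mult (\<lambda>\<alpha>. mps_one \<alpha> - mps_var i \<alpha>) acc) xs Z"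
  let ?Q = "\<lambda>\<alpha>. \<alpha> \<in> expvecs S \<and> (\<forall>i<S. 1 \<le> \<alpha> i) \<and> (\<forall>i\<in>set xs. \<alpha> i = 1)"
  have IH: "\<And>\<alpha>. fs \<alpha> \<Longrightarrow> ?Y \<alpha> = (if ?Q \<alpha> then 1 else 0)" using Cons by auto
  have xS: "x < S" "x \<notin> set xs" using Cons.prems by auto
  show ?case
  proof (intro allI impI)
    fix \<alpha> :: "nat \<Rightarrow> nat" assume fa: "fs \<alpha>"
    have "foldr (\<lambda>i acc. mps_mult (\<lambda>\<alpha>. mps_one \<alpha> - mps_var i \<alpha>) acc) (x # xs) Z \<alpha>
        = ?Y \<alpha> - (if 1 \<le> \<alpha> x then ?Y (\<alpha>(x := \<alpha> x - 1)) else 0)"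
      by (simp add: mult_diff_left mult_one_left[OF fa] mult_var[OF fa])
    also have "\<dots> = (if ?Q \<alpha> then 1 else 0) - (if 1 \<le> \<alpha> x then (if ?Q (\<alpha>(x := \<alpha> x - 1)) then 1 else 0) else 0)"
      using IH[OF fa] IH[OF fs_upd_dec[OF fa]] by simp
    also have "\<dots> = (if ?Q \<alpha> \<and> \<alpha> x = 1 then 1 else 0)"
    proof (cases "\<alpha> x")
      case 0 thus ?thesis using xS by auto
    next
      case (Suc k)
      show ?thesis
      proof (cases k)
        case 0
        have "\<not> ?Q (\<alpha>(x := \<alpha> x - 1))" using xS Suc 0 by auto
        thus ?thesis using Suc 0 by simp
      next
        case (Suc k')
        have "?Q (\<alpha>(x := \<alpha> x - 1)) = ?Q \<alpha>"
        proof -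
          have "(\<forall>i<S. 1 \<le> (\<alpha>(x := \<alpha> x - 1)) i) = (\<forall>i<S. 1 \<le> \<alpha> i)"
          proof -
            have "\<And>i. (1 \<le> (\<alpha>(x := \<alpha> x - 1)) i) = (1 \<le> \<alpha> i)"
              subgoal for i by (cases "i = x") (use \<open>\<alpha> x = Suc k\<close> Suc in auto)
              done
            thus ?thesis by simp
          qed
          moreover have "(\<forall>i\<in>set xs. (\<alpha>(x := \<alpha> x - 1)) i = 1) = (\<forall>i\<in>set xs. \<alpha> i = 1)"
            using xS by auto
          ultimately show ?thesis using xS by (simp add: expvecs_upd)
        qed
        thus ?thesis using \<open>\<alpha> x = Suc k\<close> Suc by simp
      qed
    qed
    also have "\<dots> = (if \<alpha> \<in> expvecs S \<and> (\<forall>i<S. 1 \<le> \<alpha> i) \<and> (\<forall>i\<in>set (x # xs). \<alpha> i = 1) then 1 else 0)"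
      by auto
    finally show "foldr (\<lambda>i acc. mps_mult (\<lambda>\<alpha>. mps_one \<alpha> - mps_var i \<alpha>) acc) (x # xs) Z \<alpha> =
      (if \<alpha> \<in> expvecs S \<and> (\<forall>i<S. 1 \<le> \<alpha> i) \<and> (\<forall>i\<in>set (x # xs). \<alpha> i = 1) then 1 else 0)" .
  qed
qed


lemma foldr_num:
  assumes "distinct xs"
  shows "\<forall>\<alpha>. fs \<alpha> \<longrightarrow> foldr (\<lambda>i acc. mps_mult (mps_var i) acc) xs mps_one \<alpha>
     = (if \<alpha> = (\<lambda>j. if j \<in> set xs then 1 else 0) then 1 else 0)"
  using assms
proof (induction xs)
  case Nil thus ?case by (simp add: mps_one_def)
next
  case (Cons x xs)
  let ?Y = "foldr (\<lambda>i acc. mps_mult (mps_var i) acc) xs mps_one"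
  have IH: "\<And>\<alpha>. fs \<alpha> \<Longrightarrow> ?Y \<alpha> = (if \<alpha> = (\<lambda>j. if j \<in> set xs then 1 else 0) then 1 else 0)"
    using Cons by auto
  have xn: "x \<notin> set xs" using Cons.prems by auto
  show ?case
  proof (intro allI impI)
    fix \<alpha> :: "nat \<Rightarrow> nat" assume fa: "fs \<alpha>"
    have e: "(1 \<le> \<alpha> x \<and> \<alpha>(x := \<alpha> x - 1) = (\<lambda>j. if j \<in> set xs then 1 else 0))
        = (\<alpha> = (\<lambda>j. if j \<in> set (x # xs) then 1 else 0))"
    proof
      assume h: "1 \<le> \<alpha> x \<and> \<alpha>(x := \<alpha> x - 1) = (\<lambda>j. if j \<in> set xs then 1 else 0)"
      show "\<alpha> = (\<lambda>j. if j \<in> set (x # xs) then 1 else 0)"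
      proof
        fix j
        have "(\<alpha>(x := \<alpha> x - 1)) j = (if j \<in> set xs then 1 else 0)" using h by simp
        thus "\<alpha> j = (if j \<in> set (x # xs) then 1 else 0)" using h xn
          by (cases "j = x") auto
      qed
    next
      assume h: "\<alpha> = (\<lambda>j. if j \<in> set (x # xs) then 1 else 0)"
      show "1 \<le> \<alpha> x \<and> \<alpha>(x := \<alpha> x - 1) = (\<lambda>j. if j \<in> set xs then 1 else 0)"
        using h xn by (auto simp: fun_eq_iff)
    qed
    have "foldr (\<lambda>i acc. mps_mult (mps_var i) acc) (x # xs) mps_one \<alpha>
       = (if 1 \<le> \<alpha> x then ?Y (\<alpha>(x := \<alpha> x - 1)) else 0)"
      by (simp add: mult_var[OF fa])
    also have "\<dots> = (if 1 \<le> \<alpha> x \<and> \<alpha>(x := \<alpha> x - 1) = (\<lambda>j. if j \<in> set xs then 1 else 0) then 1 else 0)"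
      unfolding IH[OF fs_upd_dec[OF fa]] by simp
    also have "\<dots> = (if \<alpha> = (\<lambda>j. if j \<in> set (x # xs) then 1 else 0) then 1 else 0)"
      using e by simp
    finally show "foldr (\<lambda>i acc. mps_mult (mps_var i) acc) (x # xs) mps_one \<alpha> =
         (if \<alpha> = (\<lambda>j. if j \<in> set (x # xs) then 1 else 0) then 1 else 0)" .
  qed
qed


lemma var_zero: "mps_var i (\<lambda>_. 0) = 0"
proof -
  have "(\<lambda>_. 0::nat) \<noteq> (\<lambda>j. if j = i then 1 else 0)" by (metis zero_neq_one)
  thus ?thesis by (simp add: mps_var_def)
qed

lemma one_zero: "mps_one (\<lambda>_. 0) = 1" by (simp add: mps_one_def)

lemma foldr_zero:
  "foldr (\<lambda>i acc. mps_mult (\<lambda>\<alpha>. mps_one \<alpha> - mps_var i \<alpha>) acc) xs mps_one (\<lambda>_. 0) = 1"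
  by (induction xs) (simp_all add: mult_zero var_zero one_zero)

lemma den_zero: "FB_den S (\<lambda>_. 0) = 1"
  by (simp add: FB_den_eq mult_zero Aden_def mps_prod_def foldr_zero Lden_def var_zero one_zero)

lemma uniq:
  assumes "\<forall>\<alpha>\<in>expvecs S. mps_mult D Q \<alpha> = 0" "D (\<lambda>_. 0) = 1"
  shows "\<forall>\<alpha>\<in>expvecs S. Q \<alpha> = 0"
proof -
  have "\<forall>\<alpha>. (\<Sum>i<S. \<alpha> i) = n \<longrightarrow> \<alpha> \<in> expvecs S \<longrightarrow> Q \<alpha> = 0" for n
  proof (induction n rule: less_induct)
    case (less n)
    show ?case
    proof (intro allI impI)
      fix \<alpha> :: "nat \<Rightarrow> nat" assume n: "(\<Sum>i<S. \<alpha> i) = n" and ae: "\<alpha> \<in> expvecs S"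
      have fa: "fs \<alpha>" using ae by (rule expvecs_fs)
      have z: "(\<lambda>_. 0::nat) \<in> LE \<alpha>" by simp
      have rest: "D \<beta> * Q (\<lambda>i. \<alpha> i - \<beta> i) = 0" if b: "\<beta> \<in> LE \<alpha> - {\<lambda>_. 0}" for \<beta>
      proof -
        from b have bne: "\<beta> \<noteq> (\<lambda>_. 0)" by blast
        have "\<exists>k. \<beta> k \<noteq> 0"
        proof (rule ccontr)
          assume "\<not> (\<exists>k. \<beta> k \<noteq> 0)"
          hence "\<beta> = (\<lambda>_. 0)" by auto
          with bne show False by simp
        qed
        then obtain k where k: "\<beta> k \<noteq> 0" by blast
        have ble: "\<forall>i. \<beta> i \<le> \<alpha> i" using b by blast
        have "\<beta> k \<le> \<alpha> k" using ble by blast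
        have kS: "k < S"
        proof (rule ccontr)
          assume "\<not> k < S"
          hence "\<alpha> k = 0" using ae by (simp add: expvecs_def)
          with k \<open>\<beta> k \<le> \<alpha> k\<close> show False by simp
        qed
        have lt: "\<alpha> k - \<beta> k < \<alpha> k" using k \<open>\<beta> k \<le> \<alpha> k\<close> by simp
        have calc: "(\<Sum>i<S. \<alpha> i - \<beta> i) < (\<Sum>i<S. \<alpha> i)"
        proof (rule sum_strict_mono_ex1)
          show "finite {..<S}" by simp
          show "\<forall>x\<in>{..<S}. \<alpha> x - \<beta> x \<le> \<alpha> x" by simp
          show "\<exists>a\<in>{..<S}. \<alpha> a - \<beta> a < \<alpha> a" using kS lt by blast
        qed
        have expv: "(\<lambda>i. \<alpha> i - \<beta> i) \<in> expvecs S" using ae by (simp add: expvecs_def)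
        have "Q (\<lambda>i. \<alpha> i - \<beta> i) = 0"
          using less.IH[OF calc[unfolded n], rule_format, OF refl expv] .
        thus ?thesis by simp
      qed
      have "0 = mps_mult D Q \<alpha>" using assms(1) ae by simp
      also have "\<dots> = D (\<lambda>_. 0) * Q (\<lambda>i. \<alpha> i - 0) + (\<Sum>\<beta>\<in>LE \<alpha> - {\<lambda>_. 0}. D \<beta> * Q (\<lambda>i. \<alpha> i - \<beta> i))"
        unfolding mps_mult_def using finite_LE[OF fa] z by (rule sum.remove)
      also have "\<dots> = Q \<alpha>"
      proof -
        have "(\<Sum>\<beta>\<in>LE \<alpha> - {\<lambda>_. 0}. D \<beta> * Q (\<lambda>i. \<alpha> i - \<beta> i)) = 0"
          by (rule sum.neutral) (use rest in blast)
        thus ?thesis using assms(2) by simp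
      qed
      finally show "Q \<alpha> = 0" by simp
    qed
  qed
  thus ?thesis by blast
qed


definition PK :: "nat \<Rightarrow> ((nat \<Rightarrow> nat) \<Rightarrow> real) \<Rightarrow> mps" where
  "PK S K \<alpha> = (if \<alpha> \<in> expvecs S \<and> (\<forall>i<S. 1 \<le> \<alpha> i) then K (\<lambda>i. \<alpha> i - 1) else 0)"

lemma LP:
  assumes rec: "\<And>c. K c = 1 + (\<Sum>i<S. if 1 \<le> c i then K (c(i := c i - 1)) else 0)"
    and fa: "fs \<alpha>"
  shows "mps_mult (Lden S) (PK S K) \<alpha> = Gp S \<alpha>"
proof -
  have "mps_mult (Lden S) (PK S K) \<alpha> = PK S K \<alpha> - (\<Sum>i<S. if 1 \<le> \<alpha> i then PK S K (\<alpha>(i := \<alpha> i - 1)) else 0)"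
    unfolding Lden_def by (simp add: mult_diff_left mult_one_left[OF fa] mult_sum_left mult_var[OF fa])
  also have "\<dots> = Gp S \<alpha>"
  proof (cases "\<alpha> \<in> expvecs S \<and> (\<forall>i<S. 1 \<le> \<alpha> i)")
    case True
    define c where "c = (\<lambda>i. \<alpha> i - 1)"
    have t: "(if 1 \<le> \<alpha> i then PK S K (\<alpha>(i := \<alpha> i - 1)) else 0) = (if 1 \<le> c i then K (c(i := c i - 1)) else 0)"
      if "i < S" for i
    proof -
      have e1: "(\<lambda>j. (\<alpha>(i := \<alpha> i - 1)) j - 1) = c(i := c i - 1)" by (auto simp: c_def)
      have e2: "(\<forall>j<S. 1 \<le> (\<alpha>(i := \<alpha> i - 1)) j) = (1 \<le> c i)"
        using True that by (auto simp: c_def)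
      have cond: "(\<alpha>(i := \<alpha> i - 1) \<in> expvecs S \<and> (\<forall>j<S. 1 \<le> (\<alpha>(i := \<alpha> i - 1)) j)) = (1 \<le> c i)"
        using e2 True that by (simp add: expvecs_upd)
      have "PK S K (\<alpha>(i := \<alpha> i - 1)) = (if 1 \<le> c i then K (c(i := c i - 1)) else 0)"
        unfolding PK_def cond e1 ..
      moreover have "1 \<le> \<alpha> i" using True that by blast
      ultimately show ?thesis by simp
    qed
    have "PK S K \<alpha> = K c" using True by (simp add: PK_def c_def)
    thus ?thesis using True t rec[of c] by (simp add: Gp_def)
  next
    case False
    have "PK S K \<alpha> = 0" unfolding PK_def by (rule if_not_P[OF False])
    moreover have "(if 1 \<le> \<alpha> i then PK S K (\<alpha>(i := \<alpha> i - 1)) else 0) = 0" if "i < S" for i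
    proof -
      have N: "\<not> (\<alpha>(i := \<alpha> i - 1) \<in> expvecs S \<and> (\<forall>j<S. 1 \<le> (\<alpha>(i := \<alpha> i - 1)) j))" if "1 \<le> \<alpha> i"
      proof (cases "\<alpha> \<in> expvecs S")
        case False thus ?thesis using \<open>i < S\<close> by (simp add: expvecs_upd)
      next
        case True
        then obtain j where j: "j < S" "\<alpha> j = 0" using \<open>\<not> (\<alpha> \<in> expvecs S \<and> (\<forall>i<S. 1 \<le> \<alpha> i))\<close> by force
        hence "j \<noteq> i" using that by auto
        thus ?thesis using j by force
      qed
      show ?thesis
      proof (cases "1 \<le> \<alpha> i")
        case True
        have "PK S K (\<alpha>(i := \<alpha> i - 1)) = 0" unfolding PK_def by (rule if_not_P[OF N[OF True]])
        thus ?thesis by simp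
      qed simp
    qed
    ultimately show ?thesis using False by (simp add: Gp_def)
  qed
  finally show ?thesis .
qed

lemma solution:
  assumes rec: "\<And>c. K c = 1 + (\<Sum>i<S. if 1 \<le> c i then K (c(i := c i - 1)) else 0)"
  shows "is_expansion_FB S (PK S K)"
  unfolding is_expansion_FB_def
proof
  fix \<alpha> assume ae: "\<alpha> \<in> expvecs S"
  have fa: "fs \<alpha>" using ae by (rule expvecs_fs)
  have "mps_mult (FB_den S) (PK S K) \<alpha> = mps_mult (Aden S) (mps_mult (Lden S) (PK S K)) \<alpha>"
    by (simp add: FB_den_eq mps_assoc)
  also have "\<dots> = foldr (\<lambda>i acc. mps_mult (\<lambda>\<alpha>. mps_one \<alpha> - mps_var i \<alpha>) acc) [0..<S] (mps_mult (Lden S) (PK S K)) \<alpha>"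
    unfolding Aden_def mps_prod_def by (rule foldr_one_mult[rule_format, OF fa])
  also have "\<dots> = (if \<alpha> \<in> expvecs S \<and> (\<forall>i<S. 1 \<le> \<alpha> i) \<and> (\<forall>i\<in>set [0..<S]. \<alpha> i = 1) then 1 else 0)"
  proof -
    have A: "\<And>\<alpha>. fs \<alpha> \<Longrightarrow> mps_mult (Lden S) (PK S K) \<alpha> = Gp S \<alpha>" by (rule LP[OF rec])
    have sub: "set [0..<S] \<subseteq> {..<S}" by auto
    have F: "\<forall>\<alpha>. fs \<alpha> \<longrightarrow> foldr (\<lambda>i acc. mps_mult (\<lambda>\<alpha>. mps_one \<alpha> - mps_var i \<alpha>) acc) [0..<S] (mps_mult (Lden S) (PK S K)) \<alpha>
     = (if \<alpha> \<in> expvecs S \<and> (\<forall>i<S. 1 \<le> \<alpha> i) \<and> (\<forall>i\<in>set [0..<S]. \<alpha> i = 1) then 1 else 0)"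
      by (rule foldr_A[OF distinct_upt sub]) (rule A)
    show ?thesis using F fa by blast
  qed
  also have "\<dots> = FB_num S \<alpha>"
  proof -
    have "(\<alpha> \<in> expvecs S \<and> (\<forall>i<S. 1 \<le> \<alpha> i) \<and> (\<forall>i\<in>set [0..<S]. \<alpha> i = 1))
        = (\<alpha> = (\<lambda>j. if j \<in> set [0..<S] then 1 else 0))"
      using ae by (auto simp: expvecs_def fun_eq_iff)
    thus ?thesis using foldr_num[of "[0..<S]"] fa unfolding FB_num_def mps_prod_def by simp
  qed
  finally show "mps_mult (FB_den S) (PK S K) \<alpha> = FB_num S \<alpha>" .
qed

lemma main_series:
  assumes rec: "\<And>c. K c = 1 + (\<Sum>i<S. if 1 \<le> c i then K (c(i := c i - 1)) else 0)"
  shows "(\<exists>P. is_expansion_FB S P) \<and> (\<forall>P. is_expansion_FB S P \<longrightarrow> (\<forall>\<alpha>\<in>expvecs S. P \<alpha> = PK S K \<alpha>))"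
proof
  show "\<exists>P. is_expansion_FB S P" using solution[OF rec] by blast
  show "\<forall>P. is_expansion_FB S P \<longrightarrow> (\<forall>\<alpha>\<in>expvecs S. P \<alpha> = PK S K \<alpha>)"
  proof (intro allI impI)
    fix P assume h: "is_expansion_FB S P"
    have "\<forall>\<alpha>\<in>expvecs S. mps_mult (FB_den S) (\<lambda>\<alpha>. P \<alpha> - PK S K \<alpha>) \<alpha> = 0"
      using h solution[OF rec] by (simp add: is_expansion_FB_def mult_diff_right)
    from uniq[OF this den_zero] show "\<forall>\<alpha>\<in>expvecs S. P \<alpha> = PK S K \<alpha>" by simp
  qed
qed


lemma card_fiber_bij:
  assumes "bij_betw h X Y"
  shows "card {x\<in>X. Q (h x)} = card {y\<in>Y. Q y}"
proof -
  have inj0: "inj_on h X" using assms by (simp add: bij_betw_def)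
  have inj: "inj_on h {x\<in>X. Q (h x)}" by (rule inj_on_subset[OF inj0]) simp
  have "h ` {x\<in>X. Q (h x)} = {y \<in> h ` X. Q y}" by auto
  also have "\<dots> = {y\<in>Y. Q y}" using bij_betw_imp_surj_on[OF assms] by simp
  finally have "h ` {x\<in>X. Q (h x)} = {y\<in>Y. Q y}" .
  thus ?thesis using card_image[OF inj] by simp
qed

lemma card_PiE_bij:
  fixes h :: "'a \<Rightarrow> 'b" and Z :: "'c set"
  assumes bij: "bij_betw h X Y"
  shows "card {g \<in> Y \<rightarrow>\<^sub>E Z. P (\<lambda>x\<in>X. g (h x))} = card {f \<in> X \<rightarrow>\<^sub>E Z. P f}"
proof -
  define \<Phi> where "\<Phi> = (\<lambda>g :: 'b \<Rightarrow> 'c. \<lambda>x\<in>X. g (h x))"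
  have hX: "\<And>x. x \<in> X \<Longrightarrow> h x \<in> Y" using bij_betwE[OF bij] by blast
  have surj: "h ` X = Y" using bij by (rule bij_betw_imp_surj_on)
  have inj: "inj_on \<Phi> (Y \<rightarrow>\<^sub>E Z)"
  proof (rule inj_onI)
    fix g1 g2 assume g: "g1 \<in> Y \<rightarrow>\<^sub>E Z" "g2 \<in> Y \<rightarrow>\<^sub>E Z" and e: "\<Phi> g1 = \<Phi> g2"
    show "g1 = g2"
    proof (rule PiE_ext[OF g])
      fix y assume "y \<in> Y"
      then obtain x where x: "x \<in> X" "y = h x" using surj by blast
      have "\<Phi> g1 x = \<Phi> g2 x" using e by simp
      thus "g1 y = g2 y" using x by (simp add: \<Phi>_def)
    qed
  qed
  have sub1: "\<Phi> ` {g \<in> Y \<rightarrow>\<^sub>E Z. P (\<Phi> g)} \<subseteq> {f \<in> X \<rightarrow>\<^sub>E Z. P f}"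
  proof
    fix f assume "f \<in> \<Phi> ` {g \<in> Y \<rightarrow>\<^sub>E Z. P (\<Phi> g)}"
    then obtain g where g: "g \<in> Y \<rightarrow>\<^sub>E Z" "P (\<Phi> g)" "f = \<Phi> g" by blast
    have "\<Phi> g \<in> X \<rightarrow>\<^sub>E Z"
    proof (rule PiE_I)
      fix x assume "x \<in> X"
      thus "\<Phi> g x \<in> Z" using PiE_mem[OF g(1) hX] by (simp add: \<Phi>_def)
    next
      fix x assume "x \<notin> X" thus "\<Phi> g x = undefined" by (simp add: \<Phi>_def)
    qed
    thus "f \<in> {f \<in> X \<rightarrow>\<^sub>E Z. P f}" using g by simp
  qed
  have sub2: "{f \<in> X \<rightarrow>\<^sub>E Z. P f} \<subseteq> \<Phi> ` {g \<in> Y \<rightarrow>\<^sub>E Z. P (\<Phi> g)}"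
  proof
    fix f assume f: "f \<in> {f \<in> X \<rightarrow>\<^sub>E Z. P f}"
    have fP: "f \<in> X \<rightarrow>\<^sub>E Z" "P f" using f by auto
    define g where "g = (\<lambda>y\<in>Y. f (inv_into X h y))"
    have inv: "\<And>y. y \<in> Y \<Longrightarrow> inv_into X h y \<in> X"
      by (rule inv_into_into) (simp add: surj)
    have gf: "\<Phi> g = f"
    proof (rule ext)
      fix x show "\<Phi> g x = f x"
      proof (cases "x \<in> X")
        case True
        have ii: "inv_into X h (h x) = x" by (rule bij_betw_inv_into_left[OF bij True])
        have "\<Phi> g x = g (h x)" using True by (simp add: \<Phi>_def)
        also have "\<dots> = f (inv_into X h (h x))" using hX[OF True] by (simp add: g_def)
        also have "\<dots> = f x" by (simp only: ii)
        finally show ?thesis .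
      next
        case False
        have "f x = undefined" by (rule PiE_arb[OF fP(1) False])
        thus ?thesis using False by (simp add: \<Phi>_def)
      qed
    qed
    have gP: "g \<in> Y \<rightarrow>\<^sub>E Z"
    proof (rule PiE_I)
      fix y assume y: "y \<in> Y"
      have "f (inv_into X h y) \<in> Z" using fP(1) inv[OF y] by (rule PiE_mem)
      thus "g y \<in> Z" using y by (simp add: g_def)
    next
      fix y assume "y \<notin> Y" thus "g y = undefined" by (simp add: g_def)
    qed
    have "P (\<Phi> g)" unfolding gf by (rule fP(2))
    hence "g \<in> {g \<in> Y \<rightarrow>\<^sub>E Z. P (\<Phi> g)}" using gP by blast
    thus "f \<in> \<Phi> ` {g \<in> Y \<rightarrow>\<^sub>E Z. P (\<Phi> g)}" by (rule image_eqI[where f = \<Phi> and x = g, OF gf[symmetric]])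
  qed
  have inj2: "inj_on \<Phi> {g \<in> Y \<rightarrow>\<^sub>E Z. P (\<Phi> g)}" by (rule inj_on_subset[OF inj]) blast
  have "card {g \<in> Y \<rightarrow>\<^sub>E Z. P (\<Phi> g)} = card (\<Phi> ` {g \<in> Y \<rightarrow>\<^sub>E Z. P (\<Phi> g)})"
    by (rule card_image[OF inj2, symmetric])
  also have "\<dots> = card {f \<in> X \<rightarrow>\<^sub>E Z. P f}" using subset_antisym[OF sub1 sub2] by (rule arg_cong)
  finally show ?thesis by (simp only: \<Phi>_def)
qed

definition Deal :: "nat \<Rightarrow> 'a set \<Rightarrow> (nat \<Rightarrow> nat) \<Rightarrow> ('a \<Rightarrow> nat) set" where
  "Deal S X b = {f \<in> X \<rightarrow>\<^sub>E {0..<S}. \<forall>i<S. card {x\<in>X. f x = i} = b i}"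

definition D :: "nat \<Rightarrow> (nat \<Rightarrow> nat) \<Rightarrow> nat" where
  "D S b = card (Deal S (cards S b) b)"

lemma cards_Sigma: "cards S b = (SIGMA j:{..<S}. {..<b j})"
  by (auto simp: cards_def)

lemma finite_cards: "finite (cards S b)"
  by (simp add: cards_Sigma)

lemma card_cards: "card (cards S b) = (\<Sum>i<S. b i)"
  by (simp add: cards_Sigma)

lemma cards_cong: "(\<And>i. i < S \<Longrightarrow> b i = b' i) \<Longrightarrow> cards S b = cards S b'"
  by (auto simp: cards_def)

lemma D_cong: "(\<And>i. i < S \<Longrightarrow> b i = b' i) \<Longrightarrow> D S b = D S b'"
proof -
  assume h: "\<And>i. i < S \<Longrightarrow> b i = b' i"
  have c: "cards S b = cards S b'" using h by (rule cards_cong)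
  have e: "\<And>f X. (\<forall>i<S. card {x\<in>X. f x = i} = b i) = (\<forall>i<S. card {x\<in>X. f x = i} = b' i)"
    using h by auto
  show ?thesis unfolding D_def c Deal_def e ..
qed

lemma E_cong: "(\<And>i. i < S \<Longrightarrow> b i = b' i) \<Longrightarrow> E S b = E S b'"
proof -
  assume h: "\<And>i. i < S \<Longrightarrow> b i = b' i"
  have c: "cards S b = cards S b'" using h by (rule cards_cong)
  have e: "\<And>f X. (\<forall>i<S. card {x\<in>X. f x = i} = b i) = (\<forall>i<S. card {x\<in>X. f x = i} = b' i)"
    using h by auto
  show ?thesis unfolding E_def c e ..
qed

lemma Deal_invariant:
  fixes X :: "'a set" and Y :: "'b set"
  assumes "finite X" "finite Y" "card X = card Y"
  shows "card (Deal S X b) = card (Deal S Y b)"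
proof -
  obtain h where h: "bij_betw h X Y" using finite_same_card_bij[OF assms] by blast
  have e: "\<And>g :: 'b \<Rightarrow> nat. (\<forall>i<S. card {x\<in>X. (\<lambda>x\<in>X. g (h x)) x = i} = b i) = (\<forall>i<S. card {y\<in>Y. g y = i} = b i)"
  proof -
    fix g :: "'b \<Rightarrow> nat"
    have "\<And>i. card {x\<in>X. (\<lambda>x\<in>X. g (h x)) x = i} = card {y\<in>Y. g y = i}"
    proof -
      fix i
      have "{x\<in>X. (\<lambda>x\<in>X. g (h x)) x = i} = {x\<in>X. g (h x) = i}" by auto
      thus "card {x\<in>X. (\<lambda>x\<in>X. g (h x)) x = i} = card {y\<in>Y. g y = i}"
        using card_fiber_bij[OF h, of "\<lambda>y. g y = i"] by simp
    qed
    thus "(\<forall>i<S. card {x\<in>X. (\<lambda>x\<in>X. g (h x)) x = i} = b i) = (\<forall>i<S. card {y\<in>Y. g y = i} = b i)"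
      by simp
  qed
  have "card (Deal S X b) = card {g \<in> Y \<rightarrow>\<^sub>E {0..<S}. \<forall>i<S. card {x\<in>X. (\<lambda>x\<in>X. g (h x)) x = i} = b i}"
    unfolding Deal_def by (rule card_PiE_bij[OF h, where P = "\<lambda>f. \<forall>i<S. card {x\<in>X. f x = i} = b i", symmetric])
  also have "\<dots> = card (Deal S Y b)" unfolding Deal_def e ..
  finally show ?thesis .
qed

lemma D_zero: "(\<And>i. i < S \<Longrightarrow> b i = 0) \<Longrightarrow> D S b = 1"
proof -
  assume h: "\<And>i. i < S \<Longrightarrow> b i = 0"
  have "cards S b = {}" using h by (auto simp: cards_def)
  moreover have "Deal S {} b = {\<lambda>_. undefined}" using h by (auto simp: Deal_def)
  ultimately have "Deal S (cards S b) b = {\<lambda>_. undefined}" by simp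
  thus ?thesis by (simp add: D_def)
qed


lemma sum_upd_dec:
  fixes b :: "nat \<Rightarrow> nat"
  assumes "i < S" "1 \<le> b i"
  shows "(\<Sum>j<S. (b(i := b i - 1)) j) = (\<Sum>j<S. b j) - 1"
proof -
  have A: "(\<Sum>j<S. (b(i := b i - 1)) j) = (b(i := b i - 1)) i + (\<Sum>j\<in>{..<S} - {i}. (b(i := b i - 1)) j)"
    by (rule sum.remove) (use assms(1) in simp_all)
  have B: "(\<Sum>j\<in>{..<S} - {i}. (b(i := b i - 1)) j) = (\<Sum>j\<in>{..<S} - {i}. b j)"
    by (rule sum.cong) auto
  have C: "(\<Sum>j<S. b j) = b i + (\<Sum>j\<in>{..<S} - {i}. b j)"
    by (rule sum.remove) (use assms(1) in simp_all)
  have E: "(b(i := b i - 1)) i = b i - 1" by simp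
  show ?thesis using A B C E assms(2) by linarith
qed

lemma finite_Deal: "finite X \<Longrightarrow> finite (Deal S X b)"
  unfolding Deal_def by (rule finite_subset[of _ "X \<rightarrow>\<^sub>E {0..<S}"]) (auto intro: finite_PiE)

lemma Deal_slice:
  fixes x0 :: "'a" and X :: "'a set"
  assumes fin: "finite X" and x0: "x0 \<in> X" and iS: "i < S" and bi: "1 \<le> b i"
  shows "card {f \<in> Deal S X b. f x0 = i} = card (Deal S (X - {x0}) (b(i := b i - 1)))"
proof -
  let ?X' = "X - {x0}"
  let ?b' = "b(i := b i - 1)"
  define \<rho> where "\<rho> = (\<lambda>f :: 'a \<Rightarrow> nat. restrict f ?X')"
  define \<sigma> where "\<sigma> = (\<lambda>g :: 'a \<Rightarrow> nat. g(x0 := i))"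
  have cnt1: "card {x\<in>?X'. f x = j} = ?b' j"
    if f: "f \<in> Deal S X b" "f x0 = i" and j: "j < S" for f j
  proof (cases "j = i")
    case True
    have "{x\<in>?X'. f x = j} = {x\<in>X. f x = j} - {x0}" by auto
    moreover have "x0 \<in> {x\<in>X. f x = j}" using x0 f True by simp
    ultimately have "card {x\<in>?X'. f x = j} = card {x\<in>X. f x = j} - 1" by (simp add: card_Diff_singleton)
    moreover have "card {x\<in>X. f x = j} = b j" using f j by (simp add: Deal_def)
    ultimately show ?thesis using True by simp
  next
    case False
    have "{x\<in>?X'. f x = j} = {x\<in>X. f x = j}" using f False by auto
    moreover have "card {x\<in>X. f x = j} = b j" using f j by (simp add: Deal_def)
    ultimately show ?thesis using False by simp
  qed
  have cnt2: "card {x\<in>X. \<sigma> g x = j} = b j"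
    if g: "g \<in> Deal S ?X' ?b'" and j: "j < S" for g j
  proof (cases "j = i")
    case True
    have "{x\<in>X. \<sigma> g x = j} = insert x0 {x\<in>?X'. g x = j}" using x0 True by (auto simp: \<sigma>_def)
    moreover have "finite {x\<in>?X'. g x = j}" using fin by simp
    ultimately have "card {x\<in>X. \<sigma> g x = j} = Suc (card {x\<in>?X'. g x = j})" by simp
    moreover have "card {x\<in>?X'. g x = j} = ?b' j" using g j by (simp add: Deal_def)
    ultimately show ?thesis using True bi by simp
  next
    case False
    have "{x\<in>X. \<sigma> g x = j} = {x\<in>?X'. g x = j}" using False by (auto simp: \<sigma>_def)
    moreover have "card {x\<in>?X'. g x = j} = ?b' j" using g j by (simp add: Deal_def)
    ultimately show ?thesis using False by simp
  qed
  have "bij_betw \<rho> {f \<in> Deal S X b. f x0 = i} (Deal S ?X' ?b')"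
  proof (rule bij_betw_byWitness[where f' = \<sigma>])
    show "\<forall>f\<in>{f \<in> Deal S X b. f x0 = i}. \<sigma> (\<rho> f) = f"
    proof
      fix f assume f: "f \<in> {f \<in> Deal S X b. f x0 = i}"
      hence fP: "f \<in> X \<rightarrow>\<^sub>E {0..<S}" "f x0 = i" by (auto simp: Deal_def)
      show "\<sigma> (\<rho> f) = f"
      proof
        fix x show "\<sigma> (\<rho> f) x = f x"
          using fP PiE_arb[OF fP(1), of x] by (cases "x = x0"; cases "x \<in> X") (auto simp: \<sigma>_def \<rho>_def)
      qed
    qed
    show "\<forall>g\<in>Deal S ?X' ?b'. \<rho> (\<sigma> g) = g"
    proof
      fix g assume g: "g \<in> Deal S ?X' ?b'"
      hence gP: "g \<in> ?X' \<rightarrow>\<^sub>E {0..<S}" by (simp add: Deal_def)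
      show "\<rho> (\<sigma> g) = g"
      proof
        fix x show "\<rho> (\<sigma> g) x = g x"
          using PiE_arb[OF gP, of x] by (cases "x \<in> ?X'") (auto simp: \<sigma>_def \<rho>_def)
      qed
    qed
    show "\<rho> ` {f \<in> Deal S X b. f x0 = i} \<subseteq> Deal S ?X' ?b'"
    proof
      fix g assume "g \<in> \<rho> ` {f \<in> Deal S X b. f x0 = i}"
      then obtain f where f: "f \<in> Deal S X b" "f x0 = i" "g = \<rho> f" by blast
      have "\<rho> f \<in> ?X' \<rightarrow>\<^sub>E {0..<S}" using f(1) by (auto simp: Deal_def \<rho>_def)
      moreover have "\<forall>j<S. card {x\<in>?X'. \<rho> f x = j} = ?b' j"
      proof (intro allI impI)
        fix j assume "j < S"
        have "{x\<in>?X'. \<rho> f x = j} = {x\<in>?X'. f x = j}" by (auto simp: \<rho>_def)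
        thus "card {x\<in>?X'. \<rho> f x = j} = ?b' j" using cnt1[OF f(1,2) \<open>j < S\<close>] by simp
      qed
      ultimately show "g \<in> Deal S ?X' ?b'" using f(3) by (simp add: Deal_def)
    qed
    show "\<sigma> ` Deal S ?X' ?b' \<subseteq> {f \<in> Deal S X b. f x0 = i}"
    proof
      fix f assume "f \<in> \<sigma> ` Deal S ?X' ?b'"
      then obtain g where g: "g \<in> Deal S ?X' ?b'" "f = \<sigma> g" by blast
      have gP: "g \<in> ?X' \<rightarrow>\<^sub>E {0..<S}" using g(1) by (simp add: Deal_def)
      have "\<sigma> g \<in> X \<rightarrow>\<^sub>E {0..<S}"
      proof (rule PiE_I)
        fix x assume "x \<in> X"
        thus "\<sigma> g x \<in> {0..<S}" using iS PiE_mem[OF gP, of x] by (cases "x = x0") (auto simp: \<sigma>_def)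
      next
        fix x assume "x \<notin> X"
        thus "\<sigma> g x = undefined" using x0 PiE_arb[OF gP, of x] by (auto simp: \<sigma>_def)
      qed
      moreover have "\<forall>j<S. card {x\<in>X. \<sigma> g x = j} = b j" using cnt2[OF g(1)] by blast
      moreover have "\<sigma> g x0 = i" by (simp add: \<sigma>_def)
      ultimately show "f \<in> {f \<in> Deal S X b. f x0 = i}" using g(2) by (simp add: Deal_def)
    qed
  qed
  thus ?thesis by (rule bij_betw_same_card)
qed

lemma D_rec:
  assumes "\<exists>i<S. 1 \<le> b i"
  shows "D S b = (\<Sum>i<S. if 1 \<le> b i then D S (b(i := b i - 1)) else 0)"
proof -
  obtain i0 where i0: "i0 < S" "1 \<le> b i0" using assms by blast
  define X where "X = cards S b"
  define x0 where "x0 = (i0, 0::nat)"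
  have fin: "finite X" by (simp add: X_def finite_cards)
  have x0X: "x0 \<in> X" using i0 by (simp add: X_def x0_def cards_def)
  define I where "I = {i. i < S \<and> 1 \<le> b i}"
  have finI: "finite I" by (simp add: I_def)
  have U: "Deal S X b = (\<Union>i\<in>I. {f \<in> Deal S X b. f x0 = i})"
  proof
    show "Deal S X b \<subseteq> (\<Union>i\<in>I. {f \<in> Deal S X b. f x0 = i})"
    proof
      fix f assume f: "f \<in> Deal S X b"
      have fP: "f \<in> X \<rightarrow>\<^sub>E {0..<S}" using f by (simp add: Deal_def)
      have "f x0 \<in> {0..<S}" by (rule PiE_mem[OF fP x0X])
      hence fx0: "f x0 < S" by simp
      have "card {x\<in>X. f x = f x0} = b (f x0)" using f fx0 by (simp add: Deal_def)
      moreover have "card {x\<in>X. f x = f x0} \<noteq> 0"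
      proof -
        have "{x\<in>X. f x = f x0} \<noteq> {}" using x0X by blast
        moreover have "finite {x\<in>X. f x = f x0}" using fin by simp
        ultimately show ?thesis by simp
      qed
      ultimately have "f x0 \<in> I" using fx0 by (simp add: I_def)
      thus "f \<in> (\<Union>i\<in>I. {f \<in> Deal S X b. f x0 = i})" using f by blast
    qed
  qed blast
  have "card (Deal S X b) = card (\<Union>i\<in>I. {f \<in> Deal S X b. f x0 = i})"
    using U by (rule arg_cong)
  also have "\<dots> = (\<Sum>i\<in>I. card {f \<in> Deal S X b. f x0 = i})"
  proof (rule card_UN_disjoint)
    show "finite I" by (rule finI)
    show "\<forall>i\<in>I. finite {f \<in> Deal S X b. f x0 = i}" using finite_Deal[OF fin] by simp
    show "\<forall>i\<in>I. \<forall>j\<in>I. i \<noteq> j \<longrightarrow> {f \<in> Deal S X b. f x0 = i} \<inter> {f \<in> Deal S X b. f x0 = j} = {}"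
      by blast
  qed
  also have "\<dots> = (\<Sum>i\<in>I. D S (b(i := b i - 1)))"
  proof (rule sum.cong[OF refl])
    fix i assume "i \<in> I"
    hence i: "i < S" "1 \<le> b i" by (auto simp: I_def)
    have "card {f \<in> Deal S X b. f x0 = i} = card (Deal S (X - {x0}) (b(i := b i - 1)))"
      by (rule Deal_slice[where b = b, OF fin x0X i])
    also have "\<dots> = D S (b(i := b i - 1))"
      unfolding D_def
    proof (rule Deal_invariant)
      show "finite (X - {x0})" using fin by simp
      show "finite (cards S (b(i := b i - 1)))" by (rule finite_cards)
      have "card (X - {x0}) = (\<Sum>j<S. b j) - 1" using x0X by (simp add: card_Diff_singleton X_def card_cards)
      thus "card (X - {x0}) = card (cards S (b(i := b i - 1)))"
        using sum_upd_dec[where b = b, OF i] by (simp add: card_cards)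
    qed
    finally show "card {f \<in> Deal S X b. f x0 = i} = D S (b(i := b i - 1))" .
  qed
  also have "\<dots> = (\<Sum>i<S. if 1 \<le> b i then D S (b(i := b i - 1)) else 0)"
  proof -
    have "I = {i \<in> {..<S}. 1 \<le> b i}" by (auto simp: I_def)
    thus ?thesis by (simp only: sum.inter_filter[OF finite_lessThan, symmetric])
  qed
  finally show ?thesis by (simp add: D_def X_def)
qed


definition DE :: "nat \<Rightarrow> (nat \<times> nat) set \<Rightarrow> ((nat \<times> nat) \<Rightarrow> nat) set" where
  "DE S X = {g \<in> X \<rightarrow>\<^sub>E {0..<S}. (\<forall>x\<in>X. g x \<noteq> fst x) \<and>
              (\<forall>i<S. card {x\<in>X. g x = i} = card {x\<in>X. fst x = i})}"

definition cnt :: "(nat \<times> nat) set \<Rightarrow> nat \<Rightarrow> nat" where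
  "cnt R i = card {x\<in>R. fst x = i}"

lemma card_row: "card {t. (i, t) \<in> R} = cnt R i"
proof -
  have "Pair i ` {t. (i, t) \<in> R} = {x\<in>R. fst x = i}" by force
  moreover have "inj_on (Pair i) {t. (i, t) \<in> R}" by (simp add: inj_on_def)
  ultimately show ?thesis unfolding cnt_def by (metis card_image)
qed

lemma row_cards: "{t. (i, t) \<in> cards S c} = (if i < S then {..<c i} else {})"
  by (auto simp: cards_def)

lemma cnt_cards: "i < S \<Longrightarrow> cnt (cards S c) i = c i"
  using card_row[of i "cards S c"] by (simp add: row_cards)

lemma E_DE: "E S n = card (DE S (cards S n))"
proof -
  have e: "\<And>g. (\<forall>i<S. card {x\<in>cards S n. g x = i} = n i) =
                (\<forall>i<S. card {x\<in>cards S n. g x = i} = card {x\<in>cards S n. fst x = i})"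
    using cnt_cards[of _ S n] unfolding cnt_def by auto
  show ?thesis unfolding E_def DE_def e ..
qed

lemma DE_cnt:
  assumes R: "R \<subseteq> cards S c"
  shows "card (DE S R) = E S (cnt R)"
proof -
  let ?C = "cards S (cnt R)"
  have finR: "finite R" using R finite_cards finite_subset by blast
  have "\<forall>j. \<exists>h. bij_betw h {..<cnt R j} {t. (j, t) \<in> R}"
  proof
    fix j
    have "finite {t. (j, t) \<in> R}"
    proof -
      have "{t. (j, t) \<in> R} = snd ` {x\<in>R. fst x = j}" by force
      thus ?thesis using finR by simp
    qed
    moreover have "card {..<cnt R j} = card {t. (j, t) \<in> R}" by (simp add: card_row)
    ultimately show "\<exists>h. bij_betw h {..<cnt R j} {t. (j, t) \<in> R}"
      using finite_same_card_bij[of "{..<cnt R j}"] by blast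
  qed
  then obtain h where h: "\<And>j. bij_betw (h j) {..<cnt R j} {t. (j, t) \<in> R}" by metis
  define H where "H = (\<lambda>x. (fst x, h (fst x) (snd x)))"
  have fstH: "\<And>x. fst (H x) = fst x" by (simp add: H_def)
  have RS: "\<And>x. x \<in> R \<Longrightarrow> fst x < S" using R by (auto simp: cards_def)
  have bij: "bij_betw H ?C R"
    unfolding bij_betw_def
  proof
    show "inj_on H ?C"
    proof (rule inj_onI)
      fix x y assume x: "x \<in> ?C" and y: "y \<in> ?C" and e: "H x = H y"
      have f: "fst x = fst y" using e fstH by metis
      have "h (fst x) (snd x) = h (fst x) (snd y)" using e f by (simp add: H_def)
      moreover have "snd x \<in> {..<cnt R (fst x)}" "snd y \<in> {..<cnt R (fst x)}"
        using x y f by (auto simp: cards_def)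
      ultimately have "snd x = snd y" using h[of "fst x"] by (auto simp: bij_betw_def inj_on_def)
      thus "x = y" using f by (simp add: prod_eq_iff)
    qed
    show "H ` ?C = R"
    proof
      show "H ` ?C \<subseteq> R"
      proof
        fix y assume "y \<in> H ` ?C"
        then obtain x where x: "x \<in> ?C" "y = H x" by blast
        have "snd x \<in> {..<cnt R (fst x)}" using x by (auto simp: cards_def)
        hence "h (fst x) (snd x) \<in> {t. (fst x, t) \<in> R}" using h[of "fst x"] by (auto simp: bij_betw_def)
        thus "y \<in> R" using x by (simp add: H_def)
      qed
      show "R \<subseteq> H ` ?C"
      proof
        fix y assume y: "y \<in> R"
        obtain j t where jt: "y = (j, t)" by (cases y)
        have "t \<in> {t. (j, t) \<in> R}" using y jt by simp
        hence "t \<in> h j ` {..<cnt R j}" using h[of j] by (simp add: bij_betw_def)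
        then obtain t' where t': "t' < cnt R j" "t = h j t'" by auto
        have "j < S" using RS[OF y] jt by simp
        hence "(j, t') \<in> ?C" using t' by (simp add: cards_def)
        moreover have "y = H (j, t')" using jt t' by (simp add: H_def)
        ultimately show "y \<in> H ` ?C" by blast
      qed
    qed
  qed
  have surj: "H ` ?C = R" using bij by (simp add: bij_betw_def)
  have e: "\<And>g. ((\<forall>x\<in>?C. (\<lambda>x\<in>?C. g (H x)) x \<noteq> fst x) \<and>
              (\<forall>i<S. card {x\<in>?C. (\<lambda>x\<in>?C. g (H x)) x = i} = card {x\<in>?C. fst x = i}))
           = ((\<forall>y\<in>R. g y \<noteq> fst y) \<and> (\<forall>i<S. card {y\<in>R. g y = i} = card {y\<in>R. fst y = i}))"
  proof -
    fix g :: "nat \<times> nat \<Rightarrow> nat"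
    have 1: "(\<forall>x\<in>?C. (\<lambda>x\<in>?C. g (H x)) x \<noteq> fst x) = (\<forall>y\<in>R. g y \<noteq> fst y)"
    proof -
      have "(\<forall>x\<in>?C. (\<lambda>x\<in>?C. g (H x)) x \<noteq> fst x) = (\<forall>x\<in>?C. g (H x) \<noteq> fst (H x))"
        using fstH by simp
      also have "\<dots> = (\<forall>y\<in>H ` ?C. g y \<noteq> fst y)" by simp
      finally show ?thesis using surj by simp
    qed
    have 2: "card {x\<in>?C. (\<lambda>x\<in>?C. g (H x)) x = i} = card {y\<in>R. g y = i}" for i
    proof -
      have "{x\<in>?C. (\<lambda>x\<in>?C. g (H x)) x = i} = {x\<in>?C. g (H x) = i}" by auto
      thus ?thesis using card_fiber_bij[OF bij, of "\<lambda>y. g y = i"] by simp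
    qed
    have 3: "card {x\<in>?C. fst x = i} = card {y\<in>R. fst y = i}" for i
    proof -
      have "{x\<in>?C. fst x = i} = {x\<in>?C. fst (H x) = i}" using fstH by simp
      thus ?thesis using card_fiber_bij[OF bij, of "\<lambda>y. fst y = i"] by simp
    qed
    show "((\<forall>x\<in>?C. (\<lambda>x\<in>?C. g (H x)) x \<noteq> fst x) \<and>
              (\<forall>i<S. card {x\<in>?C. (\<lambda>x\<in>?C. g (H x)) x = i} = card {x\<in>?C. fst x = i}))
           = ((\<forall>y\<in>R. g y \<noteq> fst y) \<and> (\<forall>i<S. card {y\<in>R. g y = i} = card {y\<in>R. fst y = i}))"
      using 1 2 3 by simp
  qed
  have "card (DE S R) = card {g \<in> R \<rightarrow>\<^sub>E {0..<S}. (\<forall>x\<in>?C. (\<lambda>x\<in>?C. g (H x)) x \<noteq> fst x) \<and>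
              (\<forall>i<S. card {x\<in>?C. (\<lambda>x\<in>?C. g (H x)) x = i} = card {x\<in>?C. fst x = i})}"
    unfolding DE_def e ..
  also have "\<dots> = card (DE S ?C)"
    unfolding DE_def
    by (rule card_PiE_bij[OF bij, where P = "\<lambda>f. (\<forall>x\<in>?C. f x \<noteq> fst x) \<and>
              (\<forall>i<S. card {x\<in>?C. f x = i} = card {x\<in>?C. fst x = i})"])
  also have "\<dots> = E S (cnt R)" by (simp add: E_DE)
  finally show ?thesis .
qed


lemma card_split:
  assumes "finite X" "A \<subseteq> X"
  shows "card {x\<in>X. Q x} = card {x\<in>A. Q x} + card {x\<in>X - A. Q x}"
proof -
  have "{x\<in>X. Q x} = {x\<in>A. Q x} \<union> {x\<in>X - A. Q x}" using assms(2) by blast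
  moreover have "{x\<in>A. Q x} \<inter> {x\<in>X - A. Q x} = {}" by blast
  moreover have "finite A" using assms finite_subset by blast
  hence "finite {x\<in>A. Q x}" by simp
  moreover have "finite {x\<in>X - A. Q x}" using assms(1) by simp
  ultimately show ?thesis by (simp add: card_Un_disjoint)
qed

lemma finite_DE: "finite R \<Longrightarrow> finite (DE S R)"
  unfolding DE_def by (rule finite_subset[of _ "R \<rightarrow>\<^sub>E {0..<S}"]) (auto intro: finite_PiE)

lemma Deal_split:
  "D S c = (\<Sum>R\<in>Pow (cards S c). card (DE S R))"
proof -
  define X where "X = cards S c"
  have fin: "finite X" by (simp add: X_def finite_cards)
  have XS: "\<And>x. x \<in> X \<Longrightarrow> fst x < S" by (auto simp: X_def cards_def)
  have rowc: "\<And>i. i < S \<Longrightarrow> card {x\<in>X. fst x = i} = c i"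
    using cnt_cards unfolding cnt_def X_def by blast
  define \<rho> where "\<rho> = (\<lambda>f :: nat \<times> nat \<Rightarrow> nat. ({x\<in>X. f x \<noteq> fst x}, restrict f {x\<in>X. f x \<noteq> fst x}))"
  define \<sigma> where "\<sigma> = (\<lambda>(R, g :: nat \<times> nat \<Rightarrow> nat). \<lambda>x\<in>X. if x \<in> R then g x else fst x)"
  have "bij_betw \<rho> (Deal S X c) (SIGMA R:Pow X. DE S R)"
  proof (rule bij_betw_byWitness[where f' = \<sigma>])
    show "\<forall>f\<in>Deal S X c. \<sigma> (\<rho> f) = f"
    proof
      fix f assume f: "f \<in> Deal S X c"
      hence fP: "f \<in> X \<rightarrow>\<^sub>E {0..<S}" by (simp add: Deal_def)
      show "\<sigma> (\<rho> f) = f"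
      proof
        fix x show "\<sigma> (\<rho> f) x = f x"
          using PiE_arb[OF fP, of x] by (cases "x \<in> X") (auto simp: \<sigma>_def \<rho>_def)
      qed
    qed
    show "\<forall>p\<in>(SIGMA R:Pow X. DE S R). \<rho> (\<sigma> p) = p"
    proof
      fix p assume p: "p \<in> (SIGMA R:Pow X. DE S R)"
      then obtain R g where Rg: "p = (R, g)" "R \<subseteq> X" "g \<in> DE S R" by blast
      have gP: "g \<in> R \<rightarrow>\<^sub>E {0..<S}" "\<forall>x\<in>R. g x \<noteq> fst x" using Rg(3) by (auto simp: DE_def)
      have 1: "{x\<in>X. \<sigma> p x \<noteq> fst x} = R" using Rg gP(2) by (auto simp: \<sigma>_def)
      have 2: "restrict (\<sigma> p) R = g"
      proof
        fix x show "restrict (\<sigma> p) R x = g x"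
          using PiE_arb[OF gP(1), of x] Rg by (cases "x \<in> R") (auto simp: \<sigma>_def)
      qed
      show "\<rho> (\<sigma> p) = p" using 1 2 Rg(1) by (simp add: \<rho>_def)
    qed
    show "\<rho> ` Deal S X c \<subseteq> (SIGMA R:Pow X. DE S R)"
    proof
      fix p assume "p \<in> \<rho> ` Deal S X c"
      then obtain f where f: "f \<in> Deal S X c" "p = \<rho> f" by blast
      define R where "R = {x\<in>X. f x \<noteq> fst x}"
      have fP: "f \<in> X \<rightarrow>\<^sub>E {0..<S}" "\<forall>i<S. card {x\<in>X. f x = i} = c i" using f(1) by (auto simp: Deal_def)
      have RX: "R \<subseteq> X" by (auto simp: R_def)
      have "restrict f R \<in> DE S R"
        unfolding DE_def
      proof (intro CollectI conjI ballI allI impI)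
        show "restrict f R \<in> R \<rightarrow>\<^sub>E {0..<S}" using fP(1) RX by auto
        fix x assume "x \<in> R" thus "restrict f R x \<noteq> fst x" by (simp add: R_def)
      next
        fix i assume i: "i < S"
        have a: "card {x\<in>X. f x = i} = card {x\<in>R. f x = i} + card {x\<in>X - R. f x = i}"
          by (rule card_split[OF fin RX])
        have b: "card {x\<in>X. fst x = i} = card {x\<in>R. fst x = i} + card {x\<in>X - R. fst x = i}"
          by (rule card_split[OF fin RX])
        have "{x\<in>X - R. f x = i} = {x\<in>X - R. fst x = i}" by (auto simp: R_def)
        moreover have "card {x\<in>X. f x = i} = card {x\<in>X. fst x = i}" using fP(2) rowc i by simp
        ultimately have "card {x\<in>R. f x = i} = card {x\<in>R. fst x = i}" using a b by simp
        moreover have "{x\<in>R. restrict f R x = i} = {x\<in>R. f x = i}" by auto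
        ultimately show "card {x\<in>R. restrict f R x = i} = card {x\<in>R. fst x = i}" by simp
      qed
      thus "p \<in> (SIGMA R:Pow X. DE S R)" using f(2) RX by (simp add: \<rho>_def R_def)
    qed
    show "\<sigma> ` (SIGMA R:Pow X. DE S R) \<subseteq> Deal S X c"
    proof
      fix f assume "f \<in> \<sigma> ` (SIGMA R:Pow X. DE S R)"
      then obtain R g where Rg: "f = \<sigma> (R, g)" "R \<subseteq> X" "g \<in> DE S R" by blast
      have gP: "g \<in> R \<rightarrow>\<^sub>E {0..<S}" "\<forall>i<S. card {x\<in>R. g x = i} = card {x\<in>R. fst x = i}"
        using Rg(3) by (auto simp: DE_def)
      have "f \<in> X \<rightarrow>\<^sub>E {0..<S}"
      proof (rule PiE_I)
        fix x assume x: "x \<in> X"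
        show "f x \<in> {0..<S}"
        proof (cases "x \<in> R")
          case True thus ?thesis using x PiE_mem[OF gP(1) True] Rg(1) by (simp add: \<sigma>_def)
        next
          case False thus ?thesis using x XS[OF x] Rg(1) by (simp add: \<sigma>_def)
        qed
      next
        fix x assume "x \<notin> X" thus "f x = undefined" using Rg(1) by (simp add: \<sigma>_def)
      qed
      moreover have "\<forall>i<S. card {x\<in>X. f x = i} = c i"
      proof (intro allI impI)
        fix i assume i: "i < S"
        have a: "card {x\<in>X. f x = i} = card {x\<in>R. f x = i} + card {x\<in>X - R. f x = i}"
          by (rule card_split[OF fin Rg(2)])
        have b: "card {x\<in>X. fst x = i} = card {x\<in>R. fst x = i} + card {x\<in>X - R. fst x = i}"
          by (rule card_split[OF fin Rg(2)])
        have "{x\<in>R. f x = i} = {x\<in>R. g x = i}" using Rg(1,2) by (auto simp: \<sigma>_def)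
        moreover have "{x\<in>X - R. f x = i} = {x\<in>X - R. fst x = i}" using Rg(1) by (auto simp: \<sigma>_def)
        ultimately have "card {x\<in>X. f x = i} = card {x\<in>X. fst x = i}" using a b gP(2) i by simp
        thus "card {x\<in>X. f x = i} = c i" using rowc i by simp
      qed
      ultimately show "f \<in> Deal S X c" by (simp add: Deal_def)
    qed
  qed
  hence "card (Deal S X c) = card (SIGMA R:Pow X. DE S R)" by (rule bij_betw_same_card)
  also have "\<dots> = (\<Sum>R\<in>Pow X. card (DE S R))"
    by (rule card_SigmaI) (use fin finite_DE finite_subset in auto)
  finally show ?thesis by (simp add: D_def X_def)
qed


definition NN :: "nat \<Rightarrow> (nat \<Rightarrow> nat) \<Rightarrow> (nat \<Rightarrow> nat) set" where
  "NN S c = PiE {0..<S} (\<lambda>i. {0..c i})"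

definition cntr :: "nat \<Rightarrow> (nat \<times> nat) set \<Rightarrow> nat \<Rightarrow> nat" where
  "cntr S R = restrict (cnt R) {0..<S}"

lemma finite_NN: "finite (NN S c)"
  by (simp add: NN_def finite_PiE)

lemma count_subsets:
  assumes n: "n \<in> NN S c"
  shows "card {R \<in> Pow (cards S c). cntr S R = n} = (\<Prod>i<S. c i choose n i)"
proof -
  define X where "X = cards S c"
  define T where "T = PiE {0..<S} (\<lambda>i. {U. U \<subseteq> {..<c i} \<and> card U = n i})"
  define \<psi> where "\<psi> = (\<lambda>R :: (nat \<times> nat) set. \<lambda>i\<in>{0..<S}. {t. (i, t) \<in> R})"
  define \<chi> where "\<chi> = (\<lambda>F :: nat \<Rightarrow> nat set. SIGMA i:{0..<S}. F i)"
  have nP: "\<And>i. i \<notin> {0..<S} \<Longrightarrow> n i = undefined"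
  proof -
    fix i assume i: "i \<notin> {0..<S}"
    have "n \<in> PiE {0..<S} (\<lambda>i. {0..c i})" using n by (simp only: NN_def)
    thus "n i = undefined" using i by (rule PiE_arb)
  qed
  have "bij_betw \<psi> {R \<in> Pow X. cntr S R = n} T"
  proof (rule bij_betw_byWitness[where f' = \<chi>])
    show "\<forall>R\<in>{R \<in> Pow X. cntr S R = n}. \<chi> (\<psi> R) = R"
    proof
      fix R assume "R \<in> {R \<in> Pow X. cntr S R = n}"
      hence RX: "R \<subseteq> X" by simp
      have RS: "\<And>i t. (i, t) \<in> R \<Longrightarrow> i < S" using RX by (auto simp: X_def cards_def)
      show "\<chi> (\<psi> R) = R"
      proof (rule set_eqI)
        fix x :: "nat \<times> nat"
        obtain i t where x: "x = (i, t)" by (cases x)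
        have "(x \<in> \<chi> (\<psi> R)) = (i < S \<and> (i, t) \<in> R)" by (simp add: x \<chi>_def \<psi>_def)
        also have "\<dots> = (x \<in> R)" using RS x by blast
        finally show "(x \<in> \<chi> (\<psi> R)) = (x \<in> R)" .
      qed
    qed
    show "\<forall>F\<in>T. \<psi> (\<chi> F) = F"
    proof
      fix F assume F: "F \<in> T"
      show "\<psi> (\<chi> F) = F"
      proof
        fix i show "\<psi> (\<chi> F) i = F i"
        proof (cases "i \<in> {0..<S}")
          case True thus ?thesis by (simp add: \<chi>_def \<psi>_def)
        next
          case False
          have "F \<in> PiE {0..<S} (\<lambda>i. {U. U \<subseteq> {..<c i} \<and> card U = n i})" using F by (simp add: T_def)
          hence "F i = undefined" using False by (rule PiE_arb)
          thus ?thesis using False by (simp add: \<psi>_def)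
        qed
      qed
    qed
    show "\<psi> ` {R \<in> Pow X. cntr S R = n} \<subseteq> T"
    proof
      fix F assume "F \<in> \<psi> ` {R \<in> Pow X. cntr S R = n}"
      then obtain R where R: "R \<subseteq> X" "cntr S R = n" "F = \<psi> R" by blast
      have A1: "\<And>i. i \<in> {0..<S} \<Longrightarrow> F i \<subseteq> {..<c i} \<and> card (F i) = n i"
      proof -
        fix i assume i: "i \<in> {0..<S}"
        have "F i = {t. (i, t) \<in> R}" using R(3) i by (simp add: \<psi>_def)
        moreover have "{t. (i, t) \<in> R} \<subseteq> {..<c i}" using R(1) by (auto simp: X_def cards_def)
        moreover have "card {t. (i, t) \<in> R} = n i"
          using card_row[of i R] R(2) i by (auto simp: cntr_def)
        ultimately show "F i \<subseteq> {..<c i} \<and> card (F i) = n i" by simp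
      qed
      have A2: "\<And>i. i \<notin> {0..<S} \<Longrightarrow> F i = undefined" using R(3) by (simp add: \<psi>_def)
      show "F \<in> T" unfolding T_def
      proof (rule PiE_I)
        fix i assume "i \<in> {0..<S}" thus "F i \<in> {U. U \<subseteq> {..<c i} \<and> card U = n i}" using A1 by blast
      next
        fix i assume "i \<notin> {0..<S}" thus "F i = undefined" by (rule A2)
      qed
    qed
    show "\<chi> ` T \<subseteq> {R \<in> Pow X. cntr S R = n}"
    proof
      fix R assume "R \<in> \<chi> ` T"
      then obtain F where F: "F \<in> T" "R = \<chi> F" by blast
      have FT: "F \<in> PiE {0..<S} (\<lambda>i. {U. U \<subseteq> {..<c i} \<and> card U = n i})" using F(1) by (simp only: T_def)
      have FP: "\<And>i. i \<in> {0..<S} \<Longrightarrow> F i \<subseteq> {..<c i} \<and> card (F i) = n i"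
      proof -
        fix i assume "i \<in> {0..<S}"
        from PiE_mem[OF FT this] show "F i \<subseteq> {..<c i} \<and> card (F i) = n i" by simp
      qed
      have "R \<subseteq> X"
      proof
        fix x assume "x \<in> R"
        then obtain i t where it: "x = (i, t)" "i \<in> {0..<S}" "t \<in> F i" using F(2) by (auto simp: \<chi>_def)
        have "t < c i" using FP[OF it(2)] it(3) by blast
        thus "x \<in> X" using it by (simp add: X_def cards_def)
      qed
      moreover have "cntr S R = n"
      proof
        fix i show "cntr S R i = n i"
        proof (cases "i \<in> {0..<S}")
          case True
          have "{t. (i, t) \<in> R} = F i"
          proof (rule set_eqI)
            fix t show "(t \<in> {t. (i, t) \<in> R}) = (t \<in> F i)" using True by (simp add: F(2) \<chi>_def)
          qed
          hence "cnt R i = n i" using card_row[of i R] FP[OF True] by simp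
          thus ?thesis using True by (simp add: cntr_def)
        next
          case False thus ?thesis using nP by (simp add: cntr_def)
        qed
      qed
      ultimately show "R \<in> {R \<in> Pow X. cntr S R = n}" by simp
    qed
  qed
  hence "card {R \<in> Pow X. cntr S R = n} = card T" by (rule bij_betw_same_card)
  also have "\<dots> = (\<Prod>i\<in>{0..<S}. card {U. U \<subseteq> {..<c i} \<and> card U = n i})"
    unfolding T_def by (rule card_PiE) simp
  also have "\<dots> = (\<Prod>i<S. c i choose n i)"
  proof -
    have "\<And>i. card {U. U \<subseteq> {..<c i} \<and> card U = n i} = c i choose n i"
    proof -
      fix i show "card {U. U \<subseteq> {..<c i} \<and> card U = n i} = c i choose n i"
        using n_subsets[of "{..<c i}" "n i"] by simp
    qed
    thus ?thesis by (simp only: atLeast0LessThan)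
  qed
  finally show ?thesis by (simp add: X_def)
qed

lemma D_formula:
  "D S c = (\<Sum>n\<in>NN S c. (\<Prod>i<S. c i choose n i) * E S n)"
proof -
  define X where "X = cards S c"
  have fin: "finite X" by (simp add: X_def finite_cards)
  have "D S c = (\<Sum>R\<in>Pow X. E S (cntr S R))"
    unfolding Deal_split X_def
  proof (rule sum.cong[OF refl])
    fix R assume "R \<in> Pow (cards S c)"
    hence "card (DE S R) = E S (cnt R)" by (intro DE_cnt) simp
    also have "\<dots> = E S (cntr S R)" by (rule E_cong) (simp add: cntr_def)
    finally show "card (DE S R) = E S (cntr S R)" .
  qed
  also have "\<dots> = (\<Sum>n\<in>NN S c. \<Sum>R\<in>{R\<in>Pow X. cntr S R = n}. E S (cntr S R))"
  proof (rule sum.group[symmetric])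
    show "finite (Pow X)" using fin by simp
    show "finite (NN S c)" by (rule finite_NN)
    show "cntr S ` Pow X \<subseteq> NN S c"
    proof
      fix n assume "n \<in> cntr S ` Pow X"
      then obtain R where R: "R \<subseteq> X" "n = cntr S R" by blast
      have "\<And>i. i < S \<Longrightarrow> cnt R i \<le> c i"
      proof -
        fix i assume i: "i < S"
        have "cnt R i \<le> cnt X i" unfolding cnt_def by (rule card_mono) (use fin R in auto)
        thus "cnt R i \<le> c i" using cnt_cards[OF i] by (simp add: X_def)
      qed
      thus "n \<in> NN S c" using R(2) by (auto simp: NN_def cntr_def)
    qed
  qed
  also have "\<dots> = (\<Sum>n\<in>NN S c. card {R\<in>Pow X. cntr S R = n} * E S n)"
    by (rule sum.cong[OF refl]) simp
  also have "\<dots> = (\<Sum>n\<in>NN S c. (\<Prod>i<S. c i choose n i) * E S n)"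
  proof (rule sum.cong[OF refl])
    fix n assume "n \<in> NN S c"
    from count_subsets[OF this] show "card {R\<in>Pow X. cntr S R = n} * E S n = (\<Prod>i<S. c i choose n i) * E S n"
      by (simp only: X_def)
  qed
  finally show ?thesis .
qed


lemma NN_iff: "b \<in> NN S c \<longleftrightarrow> (\<forall>j<S. b j \<le> c j) \<and> (\<forall>j. \<not> j < S \<longrightarrow> b j = undefined)"
  by (auto simp: NN_def PiE_iff extensional_def)

definition Kn :: "nat \<Rightarrow> (nat \<Rightarrow> nat) \<Rightarrow> nat" where
  "Kn S c = (\<Sum>b\<in>NN S c. D S b)"

lemma slice_sum:
  assumes iS: "i < S"
  shows "(\<Sum>b\<in>NN S c. if 1 \<le> b i then D S (b(i := b i - 1)) else 0)
       = (if 1 \<le> c i then Kn S (c(i := c i - 1)) else 0)"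
proof -
  have "(\<Sum>b\<in>NN S c. if 1 \<le> b i then D S (b(i := b i - 1)) else 0)
      = (\<Sum>b\<in>{b \<in> NN S c. 1 \<le> b i}. D S (b(i := b i - 1)))"
    by (rule sum.inter_filter[OF finite_NN, symmetric])
  also have "\<dots> = (if 1 \<le> c i then Kn S (c(i := c i - 1)) else 0)"
  proof (cases "1 \<le> c i")
    case False
    have E0: "{b \<in> NN S c. 1 \<le> b i} = {}"
    proof -
      have "\<And>b. b \<in> NN S c \<Longrightarrow> b i \<le> c i" using iS by (simp add: NN_iff)
      thus ?thesis using False by fastforce
    qed
    show ?thesis unfolding E0 sum.empty using False by simp
  next
    case True
    have "(\<Sum>b\<in>{b \<in> NN S c. 1 \<le> b i}. D S (b(i := b i - 1))) = (\<Sum>b\<in>NN S (c(i := c i - 1)). D S b)"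
    proof (rule sum.reindex_bij_witness[where i = "\<lambda>b. b(i := b i + 1)" and j = "\<lambda>b. b(i := b i - 1)"])
      fix b assume b: "b \<in> {b \<in> NN S c. 1 \<le> b i}"
      show "(b(i := b i - 1))(i := (b(i := b i - 1)) i + 1) = b" using b by auto
      show "b(i := b i - 1) \<in> NN S (c(i := c i - 1))" using b iS by (auto simp: NN_iff)
      show "D S (b(i := b i - 1)) = D S (b(i := b i - 1))" ..
    next
      fix b assume b: "b \<in> NN S (c(i := c i - 1))"
      show "(b(i := b i + 1))(i := (b(i := b i + 1)) i - 1) = b" by auto
      have "b i \<le> c i - 1" using b iS by (auto simp: NN_iff)
      thus "b(i := b i + 1) \<in> {b \<in> NN S c. 1 \<le> b i}" using b iS True by (auto simp: NN_iff)
    qed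
    thus ?thesis using True by (simp add: Kn_def)
  qed
  finally show ?thesis .
qed

lemma Kn_rec: "Kn S c = 1 + (\<Sum>i<S. if 1 \<le> c i then Kn S (c(i := c i - 1)) else 0)"
proof -
  define b0 where "b0 = (\<lambda>i\<in>{0..<S}. 0::nat)"
  have b0N: "b0 \<in> NN S c" by (simp add: NN_iff b0_def)
  have Dsum: "D S b = (if b = b0 then 1 else 0) + (\<Sum>i<S. if 1 \<le> b i then D S (b(i := b i - 1)) else 0)"
    if b: "b \<in> NN S c" for b
  proof (cases "b = b0")
    case True
    have "D S b = 1" by (rule D_zero) (simp add: True b0_def)
    moreover have "(\<Sum>i<S. if 1 \<le> b i then D S (b(i := b i - 1)) else 0) = 0"
      by (rule sum.neutral) (simp add: True b0_def)
    ultimately show ?thesis using True by simp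
  next
    case False
    have "\<exists>i<S. 1 \<le> b i"
    proof (rule ccontr)
      assume "\<not> (\<exists>i<S. 1 \<le> b i)"
      hence "\<forall>i<S. b i = 0" by auto
      hence "b = b0" using b by (auto simp: fun_eq_iff b0_def NN_iff)
      thus False using False by simp
    qed
    thus ?thesis using D_rec False by simp
  qed
  have "Kn S c = (\<Sum>b\<in>NN S c. (if b = b0 then 1 else 0) + (\<Sum>i<S. if 1 \<le> b i then D S (b(i := b i - 1)) else 0))"
    unfolding Kn_def by (rule sum.cong[OF refl]) (rule Dsum)
  also have "\<dots> = (\<Sum>b\<in>NN S c. (if b = b0 then 1 else 0)) + (\<Sum>b\<in>NN S c. \<Sum>i<S. if 1 \<le> b i then D S (b(i := b i - 1)) else 0)"
    by (rule sum.distrib)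
  also have "(\<Sum>b\<in>NN S c. (if b = b0 then 1 else 0)) = (1::nat)"
    using b0N finite_NN by (simp add: sum.delta)
  also have "(\<Sum>b\<in>NN S c. \<Sum>i<S. if 1 \<le> b i then D S (b(i := b i - 1)) else 0)
      = (\<Sum>i<S. \<Sum>b\<in>NN S c. if 1 \<le> b i then D S (b(i := b i - 1)) else 0)"
    by (rule sum.swap)
  also have "\<dots> = (\<Sum>i<S. if 1 \<le> c i then Kn S (c(i := c i - 1)) else 0)"
    by (rule sum.cong[OF refl]) (rule slice_sum, simp)
  finally show ?thesis .
qed


lemma Kn_B:
  assumes m: "\<forall>i<S. 0 < m i"
  shows "Kn S (\<lambda>i. m i - 1) = B S m"
proof -
  define c where "c = (\<lambda>i. m i - 1)"
  have mc: "\<And>i. i < S \<Longrightarrow> m i = Suc (c i)" using m by (simp add: c_def)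
  have "Kn S c = (\<Sum>b\<in>NN S c. \<Sum>n\<in>NN S b. (\<Prod>i<S. b i choose n i) * E S n)"
    unfolding Kn_def by (rule sum.cong[OF refl]) (rule D_formula)
  also have "\<dots> = (\<Sum>b\<in>NN S c. \<Sum>n\<in>NN S c. (\<Prod>i<S. b i choose n i) * E S n)"
  proof (rule sum.cong[OF refl])
    fix b assume b: "b \<in> NN S c"
    show "(\<Sum>n\<in>NN S b. (\<Prod>i<S. b i choose n i) * E S n) = (\<Sum>n\<in>NN S c. (\<Prod>i<S. b i choose n i) * E S n)"
    proof (rule sum.mono_neutral_left[OF finite_NN])
      show "NN S b \<subseteq> NN S c"
      proof
        fix x assume x: "x \<in> NN S b"
        show "x \<in> NN S c" using x b unfolding NN_iff by (meson le_trans)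
      qed
      show "\<forall>n\<in>NN S c - NN S b. (\<Prod>i<S. b i choose n i) * E S n = 0"
      proof
        fix n assume n: "n \<in> NN S c - NN S b"
        then obtain i where i: "i < S" "\<not> n i \<le> b i" by (auto simp: NN_iff)
        have "(\<Prod>i<S. b i choose n i) = 0"
        proof (rule prod_zero)
          show "finite {..<S}" by simp
          show "\<exists>a\<in>{..<S}. b a choose n a = 0" using i by (intro bexI[of _ i]) auto
        qed
        thus "(\<Prod>i<S. b i choose n i) * E S n = 0" by simp
      qed
    qed
  qed
  also have "\<dots> = (\<Sum>n\<in>NN S c. \<Sum>b\<in>NN S c. (\<Prod>i<S. b i choose n i) * E S n)"
    by (rule sum.swap)
  also have "\<dots> = (\<Sum>n\<in>NN S c. (\<Sum>b\<in>NN S c. \<Prod>i<S. b i choose n i) * E S n)"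
    by (simp add: sum_distrib_right)
  also have "\<dots> = (\<Sum>n\<in>NN S c. (\<Prod>i<S. m i choose (n i + 1)) * E S n)"
  proof (rule sum.cong[OF refl])
    fix n
    have "(\<Sum>b\<in>NN S c. \<Prod>i<S. b i choose n i) = (\<Sum>b\<in>PiE {0..<S} (\<lambda>i. {0..c i}). \<Prod>i\<in>{0..<S}. b i choose n i)"
      by (simp add: NN_def atLeast0LessThan)
    also have "\<dots> = (\<Prod>i\<in>{0..<S}. \<Sum>y\<in>{0..c i}. y choose n i)"
      by (rule prod_sum_PiE[symmetric]) simp_all
    also have "\<dots> = (\<Prod>i<S. m i choose (n i + 1))"
    proof -
      have "\<And>i. i < S \<Longrightarrow> (\<Sum>y\<in>{0..c i}. y choose n i) = m i choose (n i + 1)"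
        using sum_choose_upper mc by (simp add: atLeast0AtMost)
      thus ?thesis by (simp add: atLeast0LessThan)
    qed
    finally show "(\<Sum>b\<in>NN S c. \<Prod>i<S. b i choose n i) * E S n = (\<Prod>i<S. m i choose (n i + 1)) * E S n"
      by simp
  qed
  also have "\<dots> = B S m"
    unfolding B_def
  proof (rule sum.reindex_bij_witness[where i = "\<lambda>k. \<lambda>i\<in>{0..<S}. k i - 1" and j = "\<lambda>n. \<lambda>i\<in>{0..<S}. n i + 1"])
    fix n assume n: "n \<in> NN S c"
    have nP: "\<forall>j<S. n j \<le> c j" "\<forall>j. \<not> j < S \<longrightarrow> n j = undefined" using n by (auto simp: NN_iff)
    show "(\<lambda>i\<in>{0..<S}. (\<lambda>i\<in>{0..<S}. n i + 1) i - 1) = n"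
      using nP by (auto simp: fun_eq_iff)
    show "(\<lambda>i\<in>{0..<S}. n i + 1) \<in> PiE {0..<S} (\<lambda>i. {1..m i})"
      using nP mc by auto
    have "E S (\<lambda>i. (\<lambda>i\<in>{0..<S}. n i + 1) i - 1) = E S n" by (rule E_cong) simp
    moreover have "(\<Prod>i<S. m i choose (\<lambda>i\<in>{0..<S}. n i + 1) i) = (\<Prod>i<S. m i choose (n i + 1))"
      by (rule prod.cong) auto
    ultimately show "(\<Prod>i<S. m i choose (\<lambda>i\<in>{0..<S}. n i + 1) i) * E S (\<lambda>i. (\<lambda>i\<in>{0..<S}. n i + 1) i - 1)
        = (\<Prod>i<S. m i choose (n i + 1)) * E S n" by simp
  next
    fix k assume k: "k \<in> PiE {0..<S} (\<lambda>i. {1..m i})"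
    show "(\<lambda>i\<in>{0..<S}. (\<lambda>i\<in>{0..<S}. k i - 1) i + 1) = k"
    proof
      fix i show "(\<lambda>i\<in>{0..<S}. (\<lambda>i\<in>{0..<S}. k i - 1) i + 1) i = k i"
      proof (cases "i \<in> {0..<S}")
        case True
        have "k i \<in> {1..m i}" by (rule PiE_mem[OF k True])
        thus ?thesis using True by simp
      next
        case False thus ?thesis using PiE_arb[OF k False] by simp
      qed
    qed
    have "\<And>j. j < S \<Longrightarrow> k j - 1 \<le> c j"
    proof -
      fix j assume j: "j < S"
      have "k j \<in> {1..m j}" using PiE_mem[OF k] j by simp
      thus "k j - 1 \<le> c j" using mc[OF j] by auto
    qed
    thus "(\<lambda>i\<in>{0..<S}. k i - 1) \<in> NN S c" by (simp add: NN_iff)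
  qed
  finally show ?thesis by (simp add: c_def)
qed


lemma Kn_cong: "(\<And>i. i < S \<Longrightarrow> c i = c' i) \<Longrightarrow> Kn S c = Kn S c'"
proof -
  assume h: "\<And>i. i < S \<Longrightarrow> c i = c' i"
  have "NN S c = NN S c'" unfolding NN_def by (rule PiE_cong) (simp add: h)
  thus ?thesis by (simp add: Kn_def)
qed

theorem mainTheorem11:
  fixes S :: nat and m :: "nat \<Rightarrow> nat"
  assumes "\<forall>i<S. 0 < m i"
  shows "(\<exists>P. is_expansion_FB S P) \<and>
         (\<forall>P. is_expansion_FB S P \<longrightarrow>
              P (\<lambda>i. if i < S then m i else 0) = real (B S m))"
proof -
  define K where "K = (\<lambda>c. real (Kn S c))"
  have rec: "\<And>c. K c = 1 + (\<Sum>i<S. if 1 \<le> c i then K (c(i := c i - 1)) else 0)"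
  proof -
    fix c
    have "K c = real (1 + (\<Sum>i<S. if 1 \<le> c i then Kn S (c(i := c i - 1)) else 0))"
      unfolding K_def by (subst Kn_rec) (rule refl)
    also have "\<dots> = 1 + (\<Sum>i<S. if 1 \<le> c i then K (c(i := c i - 1)) else 0)"
      unfolding K_def of_nat_add of_nat_sum by (intro arg_cong2[where f = "(+)"] sum.cong) auto
    finally show "K c = 1 + (\<Sum>i<S. if 1 \<le> c i then K (c(i := c i - 1)) else 0)" .
  qed
  note ms = main_series[OF rec]
  define \<alpha> where "\<alpha> = (\<lambda>i. if i < S then m i else 0)"
  have ae: "\<alpha> \<in> expvecs S" by (simp add: \<alpha>_def expvecs_def)
  have a1: "\<forall>i<S. 1 \<le> \<alpha> i" using assms by (simp add: \<alpha>_def Suc_le_eq)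
  have val: "PK S K \<alpha> = real (B S m)"
  proof -
    have "PK S K \<alpha> = K (\<lambda>i. \<alpha> i - 1)" using ae a1 by (simp add: PK_def)
    also have "\<dots> = real (Kn S (\<lambda>i. m i - 1))" unfolding K_def
      by (subst Kn_cong[of S "\<lambda>i. \<alpha> i - 1" "\<lambda>i. m i - 1"]) (simp_all add: \<alpha>_def)
    also have "\<dots> = real (B S m)" using Kn_B[OF assms] by simp
    finally show ?thesis .
  qed
  show ?thesis
  proof
    show "\<exists>P. is_expansion_FB S P" using ms by blast
    show "\<forall>P. is_expansion_FB S P \<longrightarrow> P (\<lambda>i. if i < S then m i else 0) = real (B S m)"
    proof (intro allI impI)
      fix P assume "is_expansion_FB S P"
      hence "P \<alpha> = PK S K \<alpha>" using ms ae by blast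
      thus "P (\<lambda>i. if i < S then m i else 0) = real (B S m)" using val by (simp add: \<alpha>_def)
    qed
  qed
qed


end
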